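(* For all $A\in\mathcal{M}$, $W\in\mathcal{W}$, $\varepsilon\in\mathbb{R}\setminus\{0\}$ and unit vectors $u\in S^{d-1}$, $$0\le\sigma_{\varepsilon u;W}(A)\le V_u(A;W)\quad\text{and}\quad\lim_{\varepsilon\to0}\sigma_{\varepsilon u;W}(A)=V_u(A;W).$$ Consequently, for all $A\in\mathcal{M}$ and $\varepsilon\ne0$, $0\le\sum_{j=1}^d\sigma_{\varepsilon e_j;W}(A)\le{\operatorname{Per}}_{\mathbf{B}}(A;W)$ and $\lim_{\varepsilon\to0}\sum_{j=1}^d\sigma_{\varepsilon e_j;W}(A)={\operatorname{Per}}_{\mathbf{B}}(A;W)$.
   Context: $\mathcal{M}$: Lebesgue measurable subsets of $\mathbb{R}^d$ modulo null sets. $\mathcal{W}$: bounded open $W$ with $\mathcal{L}^d(\partial W)=0$. $\delta_{y;W}(A)=\mathcal{L}^d(A\cap(y+A)\cap W)$. $W\ominus B=\{x:x+B\subset W\}$, and $[a,b]$ denotes the segment. For $u\ne0$: $\sigma_{u;W}(A)=\frac1{\|u\|}(\delta_{0;W\ominus[-u,0]}(A)-\delta_{u;W\ominus[-u,0]}(A)+\delta_{0;W\ominus[0,u]}(A)-\delta_{-u;W\ominus[0,u]}(A))$. $V_u(A;U)=\sup\{\int_U\mathbb{1}_A\langle\nabla\varphi,u\rangle dx:\varphi\in C^1_c(U,\mathbb{R}),|\varphi|\le1\}$; ${\operatorname{Per}}_{\mathbf{B}}(A;U)=\sum_{j=1}^dV_{e_j}(A;U)$, $(e_j)$ the canonical basis.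 *)

theory Defs
  imports "HOL-Analysis.Analysis"
begin

definition translate_set :: "'a::euclidean_space \<Rightarrow> 'a set \<Rightarrow> 'a set" where
  "translate_set y A = (\<lambda>a. y + a) ` A"

definition delta :: "'a::euclidean_space \<Rightarrow> 'a set \<Rightarrow> 'a set \<Rightarrow> real" where
  "delta y W A = measure lebesgue (A \<inter> translate_set y A \<inter> W)"

definition erosion :: "'a::euclidean_space set \<Rightarrow> 'a set \<Rightarrow> 'a set" where
  "erosion W B = {x. \<forall>b\<in>B. x + b \<in> W}"

definition sigma_cov :: "'a::euclidean_space \<Rightarrow> 'a set \<Rightarrow> 'a set \<Rightarrow> real" where
  "sigma_cov u W A =
     (1 / norm u) *
       (delta 0 (erosion W (closed_segment (- u) 0)) A
        - delta u (erosion W (closed_segment (- u) 0)) A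
        + delta 0 (erosion W (closed_segment 0 u)) A
        - delta (- u) (erosion W (closed_segment 0 u)) A)"

definition test_fun :: "'a::euclidean_space set \<Rightarrow> ('a \<Rightarrow> real) \<Rightarrow> ('a \<Rightarrow> 'a) \<Rightarrow> bool" where
  "test_fun U \<phi> g \<longleftrightarrow>
     (\<forall>x. (\<phi> has_derivative (\<lambda>h. g x \<bullet> h)) (at x)) \<and> continuous_on UNIV g \<and>
     compact (closure {x. \<phi> x \<noteq> 0}) \<and> closure {x. \<phi> x \<noteq> 0} \<subseteq> U \<and>
     (\<forall>x. \<bar>\<phi> x\<bar> \<le> 1)"

definition dir_var :: "'a::euclidean_space \<Rightarrow> 'a set \<Rightarrow> 'a set \<Rightarrow> ereal" where
  "dir_var u A U =
     (SUP p \<in> {(\<phi>, g). test_fun U \<phi> g}.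
        ereal (LINT x:U|lebesgue. indicator A x * (snd p x \<bullet> u)))"

definition per_B :: "'a::euclidean_space set \<Rightarrow> 'a set \<Rightarrow> ereal" where
  "per_B A U = (\<Sum>b\<in>Basis. dir_var b A U)"

end

theory Submission
  imports Defs
begin


locale setting =
  fixes A W :: "'a::euclidean_space set"
  assumes Ameas: "A \<in> sets lebesgue" and bW: "bounded W" and oW: "open W"
begin

definition E :: "'a \<Rightarrow> 'a set" where "E w = erosion W (closed_segment 0 w)"
definition Nset :: "'a \<Rightarrow> 'a set" where "Nset w = {y \<in> E w. y \<in> A \<and> y + w \<notin> A}"
definition Pset :: "'a \<Rightarrow> 'a set" where "Pset w = {y \<in> E w. y \<notin> A \<and> y + w \<in> A}"

lemma E_iff: "x \<in> E w \<longleftrightarrow> (\<forall>t\<in>{0..1}. x + t *\<^sub>R w \<in> W)"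
  unfolding E_def erosion_def closed_segment_def by (fastforce simp: add.commute)

lemma E_sub: "E w \<subseteq> W"
  using E_iff[of _ w] by (metis atLeastAtMost_iff order_refl zero_le_one scale_zero_left add_0_right subsetI)

lemma E_open: "open (E w)"
unfolding open_contains_ball
proof (intro ballI)
  fix x assume x: "x \<in> E w"
  have K: "compact ((\<lambda>t. x + t *\<^sub>R w) ` {0..1})"
    by (intro compact_continuous_image continuous_intros) auto
  have "(\<lambda>t. x + t *\<^sub>R w) ` {0..1} \<subseteq> W" using x E_iff by auto
  then obtain e where e: "e > 0" "(\<Union>y\<in>(\<lambda>t. x + t *\<^sub>R w) ` {0..1}. ball y e) \<subseteq> W"
    using compact_subset_open_imp_ball_epsilon_subset[OF K oW] by blast
  have "ball x e \<subseteq> E w"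
  proof
    fix z assume z: "z \<in> ball x e"
    show "z \<in> E w" unfolding E_iff
    proof
      fix t :: real assume t: "t \<in> {0..1}"
      have "z + t *\<^sub>R w \<in> ball (x + t *\<^sub>R w) e" using z by (simp add: dist_norm)
      then show "z + t *\<^sub>R w \<in> W" using e t by blast
    qed
  qed
  then show "\<exists>e>0. ball x e \<subseteq> E w" using e by blast
qed

lemma E_bounded: "bounded (E w)" using E_sub bW bounded_subset by blast

lemma E_meas: "E w \<in> sets lebesgue" using E_open by (simp add: borel_open sets_completionI_sets)

lemma shiftA_eq: "(\<lambda>a. c + a) ` A = {y. y - c \<in> A}"
  by (force simp: algebra_simps)

lemma shiftA_meas: "{y. y + w \<in> A} \<in> sets lebesgue"
proof -
  have "{y. y + w \<in> A} = (\<lambda>a. (-w) + a) ` A" by (force simp: algebra_simps)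
  then show ?thesis using lebesgue_sets_translation[OF Ameas, of "-w"] by simp
qed

lemma Nset_meas: "Nset w \<in> lmeasurable"
proof -
  have "Nset w = E w \<inter> A \<inter> (UNIV - {y. y + w \<in> A})" unfolding Nset_def by auto
  also have "\<dots> \<in> sets lebesgue" using E_meas Ameas shiftA_meas by auto
  finally show ?thesis
    by (intro bounded_set_imp_lmeasurable) (auto intro: bounded_subset[OF E_bounded] simp: Nset_def)
qed

lemma Pset_meas: "Pset w \<in> lmeasurable"
proof -
  have "Pset w = E w \<inter> (UNIV - A) \<inter> {y. y + w \<in> A}" unfolding Pset_def by auto
  also have "\<dots> \<in> sets lebesgue" using E_meas Ameas shiftA_meas by auto
  finally show ?thesis
    by (intro bounded_set_imp_lmeasurable) (auto intro: bounded_subset[OF E_bounded] simp: Pset_def)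
qed

lemma Pset_shift: "(\<lambda>y. w + y) ` Pset w = Nset (- w)"
proof -
  have Ew: "w + y \<in> E (-w) \<longleftrightarrow> y \<in> E w" for y
  proof
    assume "w + y \<in> E (-w)"
    then have h: "\<forall>t\<in>{0..1}. w + y + t *\<^sub>R (-w) \<in> W" using E_iff by blast
    show "y \<in> E w" unfolding E_iff
    proof
      fix t :: real assume "t \<in> {0..1}"
      then have "1 - t \<in> {0..1}" by auto
      with h have "w + y + (1-t) *\<^sub>R (-w) \<in> W" by blast
      then show "y + t *\<^sub>R w \<in> W" by (simp add: algebra_simps)
    qed
  next
    assume "y \<in> E w"
    then have h: "\<forall>t\<in>{0..1}. y + t *\<^sub>R w \<in> W" using E_iff by blast
    show "w + y \<in> E (-w)" unfolding E_iff
    proof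
      fix t :: real assume "t \<in> {0..1}"
      then have "1 - t \<in> {0..1}" by auto
      with h have "y + (1-t) *\<^sub>R w \<in> W" by blast
      then show "w + y + t *\<^sub>R (-w) \<in> W" by (simp add: algebra_simps)
    qed
  qed
  show ?thesis
  proof (rule set_eqI)
    fix x
    show "x \<in> (\<lambda>y. w + y) ` Pset w \<longleftrightarrow> x \<in> Nset (-w)"
      using Ew[of "x - w"] unfolding Pset_def Nset_def
      by (auto simp: image_iff algebra_simps intro!: bexI[of _ "x - w"])
  qed
qed

lemma Pset_measure: "measure lebesgue (Pset w) = measure lebesgue (Nset (-w))"
  using measure_translation[of w "Pset w"] Pset_shift[of w] by simp

lemma delta_diff: "delta 0 (E w) A - delta (-w) (E w) A = measure lebesgue (Nset w)"
proof -
  have t0: "translate_set 0 A = A" unfolding translate_set_def by simp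
  have t1: "translate_set (-w) A = {y. y + w \<in> A}" unfolding translate_set_def
    by (force simp: algebra_simps)
  have fm: "A \<inter> E w \<in> fmeasurable lebesgue"
    by (intro bounded_set_imp_lmeasurable) (auto intro: bounded_subset[OF E_bounded] simp: Ameas E_meas)
  have "Nset w = (A \<inter> E w) - (A \<inter> {y. y + w \<in> A} \<inter> E w)" unfolding Nset_def by auto
  then have "measure lebesgue (Nset w) = measure lebesgue (A \<inter> E w) - measure lebesgue (A \<inter> {y. y + w \<in> A} \<inter> E w)"
    using measurable_measure_Diff[OF fm, of "A \<inter> {y. y + w \<in> A} \<inter> E w"] Ameas shiftA_meas E_meas by auto
  then show ?thesis unfolding delta_def t0 t1 by (simp add: Int_commute)
qed

lemma sigma_eq: "sigma_cov w W A = (measure lebesgue (Nset w) + measure lebesgue (Nset (-w))) / norm w"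
proof -
  have c: "closed_segment (-w) 0 = closed_segment 0 (-w)" by (rule closed_segment_commute)
  have "sigma_cov w W A = (1 / norm w) * ((delta 0 (E (-w)) A - delta (- (-w)) (E (-w)) A)
        + (delta 0 (E w) A - delta (-w) (E w) A))"
    unfolding sigma_cov_def E_def c by simp
  also have "\<dots> = (1 / norm w) * (measure lebesgue (Nset (-w)) + measure lebesgue (Nset w))"
    by (simp only: delta_diff)
  finally show ?thesis by simp
qed

lemma sigma_nonneg: "0 \<le> sigma_cov w W A"
  unfolding sigma_eq by simp

lemma sigma_neg: "sigma_cov (-w) W A = sigma_cov w W A"
  unfolding sigma_eq by simp

end


lemma cont_meas:
  fixes f :: "'a::euclidean_space \<Rightarrow> 'b::euclidean_space"
  assumes "continuous_on UNIV f" shows "f \<in> borel_measurable lebesgue"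
  using measurable_completion[of f lborel borel] borel_measurable_continuous_onI[OF assms] by simp

lemma lebesgue_integral_translate:
  fixes f :: "'a::euclidean_space \<Rightarrow> real"
  assumes f: "f \<in> borel_measurable lebesgue"
  shows "integral\<^sup>L lebesgue (\<lambda>x. f (x + a)) = integral\<^sup>L lebesgue f"
proof -
  have T: "(\<lambda>x::'a. a + (\<Sum>j\<in>Basis. (1 * (x \<bullet> j)) *\<^sub>R j)) = (\<lambda>x. a + x)"
    by (simp add: euclidean_representation)
  have eq: "lebesgue = distr lebesgue lebesgue (\<lambda>x::'a. a + x)"
    using lebesgue_affine_euclidean[of "\<lambda>_. 1" a] unfolding T by (simp add: density_1)
  have m: "(\<lambda>x::'a. a + x) \<in> lebesgue \<rightarrow>\<^sub>M lebesgue"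
    using lebesgue_affine_measurable[of "\<lambda>_. 1" a] unfolding T by simp
  have "integral\<^sup>L lebesgue f = integral\<^sup>L (distr lebesgue lebesgue (\<lambda>x::'a. a + x)) f"
    using eq by simp
  also have "\<dots> = integral\<^sup>L lebesgue (\<lambda>x. f (a + x))"
    by (rule integral_distr[OF m f])
  finally show ?thesis by (simp add: add.commute)
qed

lemma integrable_bdd:
  fixes f :: "'a::euclidean_space \<Rightarrow> real"
  assumes f: "f \<in> borel_measurable lebesgue" and S: "bounded S"
    and B: "\<And>x. \<bar>f x\<bar> \<le> B" and z: "\<And>x. x \<notin> S \<Longrightarrow> f x = 0"
  shows "integrable lebesgue f"
proof -
  obtain r where r0: "\<forall>x\<in>S. norm x \<le> r" using S unfolding bounded_iff by blast
  have r: "S \<subseteq> cball 0 r" using r0 by auto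
  show ?thesis
  proof (rule integrableI_bounded_set[where A="cball 0 r" and B=B])
    show "cball 0 r \<in> sets lebesgue" by simp
    show "emeasure lebesgue (cball (0::'a) r) < \<infinity>"
      using emeasure_bounded_finite[of "cball (0::'a) r"] by (simp add: top.not_eq_extremum)
    show "AE x in lebesgue. x \<in> cball 0 r \<longrightarrow> norm (f x) \<le> B" using B by simp
    show "AE x in lebesgue. x \<notin> cball 0 r \<longrightarrow> f x = 0" using z r by (intro AE_I2) (auto simp: subset_iff)
  qed (rule f)
qed

definition c1 :: "('a::euclidean_space \<Rightarrow> real) \<Rightarrow> ('a \<Rightarrow> 'a) \<Rightarrow> bool" where
  "c1 \<psi> g \<longleftrightarrow> (\<forall>x. (\<psi> has_derivative (\<lambda>h. g x \<bullet> h)) (at x)) \<and> continuous_on UNIV g"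

definition supp :: "('a::euclidean_space \<Rightarrow> real) \<Rightarrow> 'a set" where
  "supp \<psi> = closure {x. \<psi> x \<noteq> 0}"

lemma test_fun_c1: "test_fun U \<phi> g \<Longrightarrow> c1 \<phi> g"
  unfolding test_fun_def c1_def by auto

lemma c1_cont: assumes "c1 \<psi> g" shows "continuous_on UNIV \<psi>"
proof -
  have "continuous (at x) \<psi>" for x
  proof -
    from assms have d: "(\<psi> has_derivative (\<lambda>h. g x \<bullet> h)) (at x)" unfolding c1_def by blast
    then show ?thesis by (rule has_derivative_continuous)
  qed
  then show ?thesis by (simp add: continuous_at_imp_continuous_on)
qed

lemma psi_zero: assumes "x \<notin> supp \<psi>" shows "\<psi> x = 0"
proof (rule ccontr)
  assume "\<psi> x \<noteq> 0"
  then have "x \<in> {x. \<psi> x \<noteq> 0}" by simp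
  then have "x \<in> closure {x. \<psi> x \<noteq> 0}" by (rule subsetD[OF closure_subset])
  then show False using assms unfolding supp_def by simp
qed

lemma grad_zero:
  assumes "c1 \<psi> g" "x \<notin> supp \<psi>" shows "g x = 0"
proof -
  have o: "open (- supp \<psi>)" unfolding supp_def by auto
  have d0: "((\<lambda>_. 0::real) has_derivative (\<lambda>h. 0)) (at x)" by simp
  have "(\<psi> has_derivative (\<lambda>h. 0)) (at x)"
  proof (rule has_derivative_transform_within_open[OF d0 o])
    show "x \<in> - supp \<psi>" using assms by simp
    fix y assume "y \<in> - supp \<psi>"
    then show "0 = \<psi> y" using psi_zero[of y \<psi>] by simp
  qed
  moreover have "(\<psi> has_derivative (\<lambda>h. g x \<bullet> h)) (at x)" using assms unfolding c1_def by auto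
  ultimately have "(\<lambda>h. g x \<bullet> h) = (\<lambda>h. 0)" using has_derivative_unique by blast
  from fun_cong[OF this, of "g x"] have "g x \<bullet> g x = 0" by simp
  then show ?thesis by simp
qed



lemma grad_unif:
  assumes c: "c1 \<psi> g" and K: "compact (supp \<psi>)" and e: "e > 0"
  obtains d where "d > 0" "\<And>y z. dist y z < d \<Longrightarrow> norm (g y - g z) \<le> e"
proof -
  obtain R where R0: "\<forall>x\<in>supp \<psi>. norm x \<le> R" using compact_imp_bounded[OF K] unfolding bounded_iff by blast
  have R: "supp \<psi> \<subseteq> cball 0 R" using R0 by auto
  have gc: "continuous_on UNIV g" using c unfolding c1_def by auto
  have "uniformly_continuous_on (cball 0 (R+1)) g"
    by (rule compact_uniformly_continuous) (auto intro: continuous_on_subset[OF gc])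
  then have "\<exists>d>0. \<forall>x\<in>cball 0 (R+1). \<forall>x'\<in>cball 0 (R+1). dist x' x < d \<longrightarrow> dist (g x') (g x) < e"
    unfolding uniformly_continuous_on_def using e by blast
  then obtain d0 where d0: "d0 > 0" "\<And>y z. y \<in> cball 0 (R+1) \<Longrightarrow> z \<in> cball 0 (R+1) \<Longrightarrow> dist z y < d0 \<Longrightarrow> dist (g z) (g y) < e"
    by blast
  show ?thesis
  proof (rule that[of "min d0 1"])
    show "min d0 1 > 0" using d0 by simp
    fix y z :: 'a assume yz: "dist y z < min d0 1"
    show "norm (g y - g z) \<le> e"
    proof (cases "y \<in> cball 0 R \<or> z \<in> cball 0 R")
      case True
      have yz1: "dist y z < 1" "dist z y < 1" using yz by (auto simp: dist_commute)
      have "y \<in> cball 0 (R+1) \<and> z \<in> cball 0 (R+1)"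
        using True dist_triangle[of 0 z y] dist_triangle[of 0 y z] yz1 by auto
      then have "y \<in> cball 0 (R+1)" "z \<in> cball 0 (R+1)" by auto
      then have "dist (g y) (g z) < e" using d0(2)[of z y] yz by (simp add: dist_commute)
      then show ?thesis by (simp add: dist_norm)
    next
      case False
      then have "y \<notin> supp \<psi>" "z \<notin> supp \<psi>" using R by auto
      then have "g y = 0" "g z = 0" using grad_zero[OF c] by auto
      then show ?thesis using e by simp
    qed
  qed
qed

lemma taylor1:
  assumes c: "c1 \<psi> g" and K: "compact (supp \<psi>)" and e: "e > 0"
  obtains d where "d > 0" "\<And>y h. norm h < d \<Longrightarrow> \<bar>\<psi> (y + h) - \<psi> y - g y \<bullet> h\<bar> \<le> e * norm h"
proof -
  obtain d where d: "d > 0" "\<And>y z. dist y z < d \<Longrightarrow> norm (g y - g z) \<le> e"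
    using grad_unif[OF c K e] by blast
  show ?thesis
  proof (rule that[OF d(1)])
    fix y h :: 'a assume h: "norm h < d"
    define f where "f t = \<psi> (y + t *\<^sub>R h) - t * (g y \<bullet> h)" for t :: real
    have df: "(f has_derivative (\<lambda>s. g (y + t *\<^sub>R h) \<bullet> (s *\<^sub>R h) - s * (g y \<bullet> h))) (at t)" for t
    proof -
      have "((\<lambda>t. y + t *\<^sub>R h) has_derivative (\<lambda>s. s *\<^sub>R h)) (at t)"
        by (auto intro!: derivative_eq_intros)
      moreover have "(\<psi> has_derivative (\<lambda>k. g (y + t *\<^sub>R h) \<bullet> k)) (at (y + t *\<^sub>R h))"
        using c unfolding c1_def by auto
      ultimately have "((\<lambda>t. \<psi> (y + t *\<^sub>R h)) has_derivative (\<lambda>s. g (y + t *\<^sub>R h) \<bullet> (s *\<^sub>R h))) (at t)"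
        by (rule has_derivative_compose)
      then show ?thesis unfolding f_def by (auto intro!: derivative_eq_intros)
    qed
    have fc: "continuous_on {0..1} f"
      by (intro continuous_at_imp_continuous_on ballI has_derivative_continuous[OF df])
    obtain t where t: "t \<in> {0<..<1}" "norm (f 1 - f 0) \<le> norm (g (y + t *\<^sub>R h) \<bullet> ((1-0) *\<^sub>R h) - (1-0) * (g y \<bullet> h))"
      using mvt_general[of 0 1 f "\<lambda>t s. g (y + t *\<^sub>R h) \<bullet> (s *\<^sub>R h) - s * (g y \<bullet> h)", OF _ fc df] by auto
    have "norm (g (y + t *\<^sub>R h) \<bullet> h - (g y \<bullet> h)) = \<bar>(g (y + t *\<^sub>R h) - g y) \<bullet> h\<bar>"
      by (simp add: inner_diff_left)
    also have "\<dots> \<le> norm (g (y + t *\<^sub>R h) - g y) * norm h" by (rule Cauchy_Schwarz_ineq2)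
    also have "\<dots> \<le> e * norm h"
    proof (rule mult_right_mono)
      have "dist (y + t *\<^sub>R h) y = \<bar>t\<bar> * norm h" by (simp add: dist_norm)
      also have "\<dots> \<le> norm h" using t by (simp add: mult_left_le_one_le)
      finally show "norm (g (y + t *\<^sub>R h) - g y) \<le> e" using d(2)[of "y + t *\<^sub>R h" y] h by linarith
    qed simp
    finally show "\<bar>\<psi> (y + h) - \<psi> y - g y \<bullet> h\<bar> \<le> e * norm h"
      using t(2) unfolding f_def by simp
  qed
qed



definition qf :: "real \<Rightarrow> real" where "qf s = (max 0 s)\<^sup>2"

lemma qf_deriv: "(qf has_real_derivative (2 * max 0 s)) (at s)"
proof (cases "s = 0")
  case True
  have "((\<lambda>h. (qf (0 + h) - qf 0) / h) \<longlongrightarrow> 0) (at 0)"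
  proof (rule Lim_null_comparison)
    show "\<forall>\<^sub>F h in at 0. norm ((qf (0 + h) - qf 0) / h) \<le> \<bar>h\<bar>"
    proof (rule always_eventually, rule allI)
      fix h :: real
      show "norm ((qf (0 + h) - qf 0) / h) \<le> \<bar>h\<bar>"
        by (cases "h > 0") (auto simp: qf_def power2_eq_square abs_mult)
    qed
    show "((\<lambda>h. \<bar>h\<bar>) \<longlongrightarrow> 0) (at (0::real))"
      using tendsto_rabs[OF tendsto_ident_at[of "0::real" UNIV]] by simp
  qed
  then show ?thesis using True by (simp add: DERIV_def)
next
  case False
  show ?thesis
  proof (cases "s > 0")
    case True
    have d: "((\<lambda>s. s\<^sup>2) has_real_derivative 2 * s) (at s)"
      by (auto intro!: derivative_eq_intros)
    show ?thesis
      by (rule has_field_derivative_transform_within_open[OF _ open_greaterThan[of 0]])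
         (use True d in \<open>auto simp: qf_def\<close>)
  next
    case False2: False
    then have neg: "s < 0" using False by simp
    have d: "((\<lambda>s. 0) has_real_derivative 0) (at s)" by simp
    show ?thesis
      by (rule has_field_derivative_transform_within_open[OF _ open_lessThan[of 0]])
         (use neg d in \<open>auto simp: qf_def\<close>)
  qed
qed

definition Hf :: "real \<Rightarrow> real" where "Hf s = 2 * qf s - 4 * qf (s - 1/2) + 2 * qf (s - 1)"
definition Hd :: "real \<Rightarrow> real" where "Hd s = 4 * max 0 s - 8 * max 0 (s - 1/2) + 4 * max 0 (s - 1)"

lemma Hf_deriv: "(Hf has_real_derivative Hd s) (at s)"
proof -
  have a: "((\<lambda>s. qf (s - c)) has_real_derivative (2 * max 0 (s - c))) (at s)" for c
  proof -
    have "((\<lambda>s. s - c) has_real_derivative 1) (at s)" by (auto intro!: derivative_eq_intros)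
    from DERIV_chain2[OF qf_deriv this] show ?thesis by simp
  qed
  show ?thesis unfolding Hf_def Hd_def
    using a[of 0] a[of "1/2"] a[of 1] by (auto intro!: derivative_eq_intros)
qed

lemma Hd_cont: "continuous_on UNIV Hd"
  unfolding Hd_def by (intro continuous_intros continuous_on_max)

lemma Hf_low: "s \<le> 0 \<Longrightarrow> Hf s = 0"
  by (simp add: Hf_def qf_def)

lemma Hf_high: "s \<ge> 1 \<Longrightarrow> Hf s = 1"
  by (simp add: Hf_def qf_def power2_eq_square algebra_simps)

lemma Hf_range: "0 \<le> Hf s \<and> Hf s \<le> 1"
proof -
  consider "s \<le> 0" | "0 < s \<and> s \<le> 1/2" | "1/2 < s \<and> s < 1" | "s \<ge> 1" by linarith
  then show ?thesis
  proof cases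
    case 1 then show ?thesis by (simp add: Hf_low)
  next
    case 2
    then have "Hf s = 2 * s\<^sup>2" by (simp add: Hf_def qf_def)
    moreover have "s\<^sup>2 \<le> (1/2)\<^sup>2" using 2 by (intro power_mono) auto
    ultimately show ?thesis by (auto simp: power2_eq_square)
  next
    case 3
    then have "Hf s = 1 - 2 * (1 - s)\<^sup>2" by (simp add: Hf_def qf_def power2_eq_square algebra_simps)
    moreover have "(1 - s)\<^sup>2 \<le> (1/2)\<^sup>2" using 3 by (intro power_mono) auto
    ultimately show ?thesis by (auto simp: power2_eq_square)
  next
    case 4 then show ?thesis by (simp add: Hf_high)
  qed
qed

lemma qf_pos: "qf s > 0 \<Longrightarrow> s > 0"
  by (simp add: qf_def)


lemma qf_ge: "0 \<le> a \<Longrightarrow> a \<le> s \<Longrightarrow> a\<^sup>2 \<le> qf s"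
  unfolding qf_def by (intro power_mono) auto

lemma qf_nonneg: "0 \<le> qf s" by (simp add: qf_def)

lemma qf_cont: "continuous_on UNIV qf"
  unfolding qf_def by (intro continuous_intros continuous_on_max)

lemma smooth_urysohn:
  fixes K U :: "'a::euclidean_space set"
  assumes K: "compact K" and U: "open U" and KU: "K \<subseteq> U"
  obtains ch g where "c1 ch g" "\<And>x. 0 \<le> ch x \<and> ch x \<le> 1" "\<And>x. x \<in> K \<Longrightarrow> ch x = 1"
    "compact (supp ch)" "supp ch \<subseteq> U"
proof -
  obtain e where e: "e > 0" "(\<Union>x\<in>K. cball x e) \<subseteq> U"
    using compact_subset_open_imp_cball_epsilon_subset[OF K U KU] by blast
  have "K \<subseteq> \<Union>((\<lambda>c. ball c (e/2)) ` K)" using e by force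
  then obtain F where F: "F \<subseteq> K" "finite F" "K \<subseteq> \<Union>((\<lambda>c. ball c (e/2)) ` F)"
    using compactE_image[OF K, of K "\<lambda>c. ball c (e/2)"] by blast
  define k where "k = 16 / (9 * e^4)"
  define bf where "bf c x = qf (e\<^sup>2 - (x - c) \<bullet> (x - c))" for c x :: 'a
  define bg where "bg c x = (2 * max 0 (e\<^sup>2 - (x - c) \<bullet> (x - c))) *\<^sub>R (-2 *\<^sub>R (x - c))" for c x :: 'a
  define Fx where "Fx x = k * (\<Sum>c\<in>F. bf c x)" for x
  define Fg where "Fg x = k *\<^sub>R (\<Sum>c\<in>F. bg c x)" for x
  define ch where "ch x = Hf (Fx x)" for x
  define g where "g x = Hd (Fx x) *\<^sub>R Fg x" for x
  have dbf: "(bf c has_derivative (\<lambda>h. bg c x \<bullet> h)) (at x)" for c x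
  proof -
    have p: "((\<lambda>x. e\<^sup>2 - (x - c) \<bullet> (x - c)) has_derivative (\<lambda>h. - (2 * ((x - c) \<bullet> h)))) (at x)"
      by (auto intro!: derivative_eq_intros simp: inner_commute)
    have "((\<lambda>x. qf (e\<^sup>2 - (x - c) \<bullet> (x - c))) has_derivative
        (\<lambda>h. - (2 * ((x - c) \<bullet> h)) * (2 * max 0 (e\<^sup>2 - (x - c) \<bullet> (x - c))))) (at x)"
      by (rule DERIV_compose_FDERIV[OF qf_deriv p])
    moreover have "(\<lambda>h. - (2 * ((x - c) \<bullet> h)) * (2 * max 0 (e\<^sup>2 - (x - c) \<bullet> (x - c)))) = (\<lambda>h. bg c x \<bullet> h)"
      by (auto simp: bg_def algebra_simps)
    ultimately show ?thesis unfolding bf_def by simp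
  qed
  have dFx: "(Fx has_derivative (\<lambda>h. Fg x \<bullet> h)) (at x)" for x
  proof -
    have "((\<lambda>x. \<Sum>c\<in>F. bf c x) has_derivative (\<lambda>h. \<Sum>c\<in>F. bg c x \<bullet> h)) (at x)"
      by (rule has_derivative_sum) (rule dbf)
    then have "(Fx has_derivative (\<lambda>h. k * (\<Sum>c\<in>F. bg c x \<bullet> h))) (at x)"
      unfolding Fx_def by (rule has_derivative_mult_right)
    moreover have "(\<lambda>h. k * (\<Sum>c\<in>F. bg c x \<bullet> h)) = (\<lambda>h. Fg x \<bullet> h)"
      by (auto simp: Fg_def inner_sum_left)
    ultimately show ?thesis by simp
  qed
  have dchi: "(ch has_derivative (\<lambda>h. g x \<bullet> h)) (at x)" for x
  proof -
    have "((\<lambda>x. Hf (Fx x)) has_derivative (\<lambda>h. (Fg x \<bullet> h) * Hd (Fx x))) (at x)"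
      by (rule DERIV_compose_FDERIV[OF Hf_deriv dFx])
    moreover have "(\<lambda>h. (Fg x \<bullet> h) * Hd (Fx x)) = (\<lambda>h. g x \<bullet> h)"
      by (auto simp: g_def)
    ultimately show ?thesis unfolding ch_def by simp
  qed
  have cFx: "continuous_on UNIV Fx"
    unfolding Fx_def bf_def
    by (intro continuous_intros continuous_on_compose2[OF qf_cont]) auto
  have cFg: "continuous_on UNIV Fg"
    unfolding Fg_def bg_def by (intro continuous_intros continuous_on_max)
  have cg: "continuous_on UNIV g"
    unfolding g_def by (intro continuous_intros continuous_on_compose2[OF Hd_cont cFx] cFg) auto
  have c1: "c1 ch g" unfolding c1_def using dchi cg by blast
  have bf_nn: "0 \<le> bf c x" for c x unfolding bf_def by (rule qf_nonneg)
  have onK: "ch x = 1" if x: "x \<in> K" for x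
  proof -
    obtain c where c: "c \<in> F" "x \<in> ball c (e/2)" using F(3) x by blast
    have nx: "(x - c) \<bullet> (x - c) = (norm (x - c))\<^sup>2" by (simp add: power2_norm_eq_inner)
    have "norm (x - c) < e/2" using c(2) by (simp add: dist_norm norm_minus_commute)
    then have "(norm (x - c))\<^sup>2 \<le> (e/2)\<^sup>2" by (intro power_mono) auto
    then have "3 * e\<^sup>2 / 4 \<le> e\<^sup>2 - (x - c) \<bullet> (x - c)" unfolding nx by (simp add: power_divide)
    then have "(3 * e\<^sup>2 / 4)\<^sup>2 \<le> bf c x" unfolding bf_def using e by (intro qf_ge) auto
    also have "\<dots> \<le> (\<Sum>c\<in>F. bf c x)" by (rule member_le_sum[OF c(1)]) (auto simp: bf_nn F)
    finally have "1 \<le> Fx x" unfolding Fx_def k_def using e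
      by (simp add: field_simps power2_eq_square power4_eq_xxxx)
    then show ?thesis unfolding ch_def by (rule Hf_high)
  qed
  define C where "C = (\<Union>c\<in>F. cball c e)"
  have Cc: "compact C" unfolding C_def using F(2) by (intro compact_UN) auto
  have CU: "C \<subseteq> U" unfolding C_def using F(1) e(2) by blast
  have nzC: "{x. ch x \<noteq> 0} \<subseteq> C"
  proof
    fix x assume "x \<in> {x. ch x \<noteq> 0}"
    then have "ch x \<noteq> 0" by simp
    then have "\<not> Fx x \<le> 0" unfolding ch_def using Hf_low by force
    then have "\<not> (\<forall>c\<in>F. bf c x \<le> 0)" unfolding Fx_def k_def using e
      by (metis mult_nonneg_nonpos sum_nonpos divide_nonneg_nonneg zero_le_numeral
          mult_nonneg_nonneg zero_le_power less_imp_le)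
    then obtain c where c: "c \<in> F" "bf c x > 0" by force
    have "e\<^sup>2 - (x - c) \<bullet> (x - c) > 0" using c(2) unfolding bf_def by (rule qf_pos)
    then have "(norm (x - c))\<^sup>2 < e\<^sup>2" by (simp add: power2_norm_eq_inner)
    then have "norm (x - c) < e" using e by (smt (verit) power_mono norm_ge_zero)
    then have "x \<in> cball c e" by (simp add: dist_norm norm_minus_commute)
    then show "x \<in> C" unfolding C_def using c(1) by blast
  qed
  have sC: "supp ch \<subseteq> C" unfolding supp_def
    by (rule closure_minimal[OF nzC compact_imp_closed[OF Cc]])
  have "compact (supp ch)"
    unfolding compact_eq_bounded_closed supp_def
    using sC bounded_subset[OF compact_imp_bounded[OF Cc]] unfolding supp_def by auto
  then show ?thesis
    using that[OF c1 _ onK _ order_trans[OF sC CU]] Hf_range unfolding ch_def by blast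
qed


lemma test_fun_neg: assumes "test_fun U \<phi> g" shows "test_fun U (\<lambda>x. - \<phi> x) (\<lambda>x. - g x)"
proof -
  have d: "((\<lambda>x. - \<phi> x) has_derivative (\<lambda>h. (- g x) \<bullet> h)) (at x)" for x
  proof -
    have "(\<phi> has_derivative (\<lambda>h. g x \<bullet> h)) (at x)" using assms unfolding test_fun_def by blast
    then have "((\<lambda>x. - \<phi> x) has_derivative (\<lambda>h. - (g x \<bullet> h))) (at x)" by (rule has_derivative_minus)
    then show ?thesis by simp
  qed
  have c: "continuous_on UNIV (\<lambda>x. - g x)" using assms unfolding test_fun_def by (intro continuous_on_minus) blast
  have e: "{x. - \<phi> x \<noteq> 0} = {x. \<phi> x \<noteq> 0}" by simp
  from assms have a: "compact (closure {x. \<phi> x \<noteq> 0})" "closure {x. \<phi> x \<noteq> 0} \<subseteq> U" "\<forall>x. \<bar>\<phi> x\<bar> \<le> 1"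
    unfolding test_fun_def by auto
  show ?thesis unfolding test_fun_def e
    apply (intro conjI allI)
        apply (rule d)
       apply (rule c)
      apply (rule a(1))
     apply (rule a(2))
    using a(3) by simp
qed

lemma grad_bounded:
  assumes c: "c1 \<psi> g" and K: "compact (supp \<psi>)"
  obtains B where "\<And>x. norm (g x) \<le> B"
proof -
  have gc: "continuous_on UNIV g" using c unfolding c1_def by auto
  have cg: "compact (g ` supp \<psi>)" by (rule compact_continuous_image[OF continuous_on_subset[OF gc] K]) auto
  obtain B0 where B0: "\<forall>y\<in>g ` supp \<psi>. norm y \<le> B0" using compact_imp_bounded[OF cg] unfolding bounded_iff by blast
  show ?thesis
  proof (rule that[of "max B0 0"])
    fix x show "norm (g x) \<le> max B0 0"
    proof (cases "x \<in> supp \<psi>")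
      case True then have "norm (g x) \<le> B0" using B0 by blast
      then show ?thesis by simp
    next
      case False then show ?thesis using grad_zero[OF c False] by simp
    qed
  qed
qed

lemma psi_bounded:
  assumes c: "c1 \<psi> g" and K: "compact (supp \<psi>)"
  obtains B where "\<And>x. \<bar>\<psi> x\<bar> \<le> B"
proof -
  have gc: "continuous_on UNIV \<psi>" using c1_cont[OF c] .
  have cg: "compact (\<psi> ` supp \<psi>)" by (rule compact_continuous_image[OF continuous_on_subset[OF gc] K]) auto
  obtain B0 where B0: "\<forall>y\<in>\<psi> ` supp \<psi>. norm y \<le> B0" using compact_imp_bounded[OF cg] unfolding bounded_iff by blast
  show ?thesis
  proof (rule that[of "max B0 0"])
    fix x show "\<bar>\<psi> x\<bar> \<le> max B0 0"
    proof (cases "x \<in> supp \<psi>")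
      case True then have "norm (\<psi> x) \<le> B0" using B0 by blast
      then show ?thesis by simp
    next
      case False then show ?thesis using psi_zero[OF False] by simp
    qed
  qed
qed

lemma shift_deriv:
  assumes "c1 \<psi> g" shows "((\<lambda>x. \<psi> (x - a)) has_derivative (\<lambda>h. g (x - a) \<bullet> h)) (at x)"
proof -
  have d1: "((\<lambda>x. x - a) has_derivative (\<lambda>h. h)) (at x)" by (auto intro!: derivative_eq_intros)
  have d2: "(\<psi> has_derivative (\<lambda>h. g (x - a) \<bullet> h)) (at (x - a))" using assms unfolding c1_def by auto
  show ?thesis using has_derivative_compose[OF d1 d2] by simp
qed

lemma shift_cont:
  fixes g :: "'a::euclidean_space \<Rightarrow> 'b::real_normed_vector"
  assumes "continuous_on UNIV g" shows "continuous_on UNIV (\<lambda>x. g (x - a))"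
  by (rule continuous_on_compose2[OF assms, of UNIV "\<lambda>x. x - a"]) (auto intro: continuous_on_diff continuous_on_id continuous_on_const)

lemma avg_test:
  fixes \<psi> :: "'a::euclidean_space \<Rightarrow> real"
  assumes c: "c1 \<psi> g" and K: "compact (supp \<psi>)" and b: "\<And>x. \<bar>\<psi> x\<bar> \<le> 1" and n: "n > 0"
    and sub: "\<And>k. k < n \<Longrightarrow> (\<lambda>y. y + a k) ` supp \<psi> \<subseteq> U"
  shows "test_fun U (\<lambda>x. (1 / real n) * (\<Sum>k<n. \<psi> (x - a k))) (\<lambda>x. (1 / real n) *\<^sub>R (\<Sum>k<n. g (x - a k)))"
proof -
  have gc: "continuous_on UNIV g" using c unfolding c1_def by auto
  have d: "((\<lambda>x. (1 / real n) * (\<Sum>k<n. \<psi> (x - a k))) has_derivative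
      (\<lambda>h. ((1 / real n) *\<^sub>R (\<Sum>k<n. g (x - a k))) \<bullet> h)) (at x)" for x
  proof -
    have "((\<lambda>x. \<Sum>k<n. \<psi> (x - a k)) has_derivative (\<lambda>h. \<Sum>k<n. g (x - a k) \<bullet> h)) (at x)"
      by (rule has_derivative_sum) (rule shift_deriv[OF c])
    then have "((\<lambda>x. (1 / real n) * (\<Sum>k<n. \<psi> (x - a k))) has_derivative
      (\<lambda>h. (1 / real n) * (\<Sum>k<n. g (x - a k) \<bullet> h))) (at x)"
      by (rule has_derivative_mult_right)
    moreover have "(\<lambda>h. (1 / real n) * (\<Sum>k<n. g (x - a k) \<bullet> h)) = (\<lambda>h. ((1 / real n) *\<^sub>R (\<Sum>k<n. g (x - a k))) \<bullet> h)"
      by (simp add: inner_sum_left)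
    ultimately show ?thesis by simp
  qed
  have cg: "continuous_on UNIV (\<lambda>x. (1 / real n) *\<^sub>R (\<Sum>k<n. g (x - a k)))"
    by (intro continuous_intros shift_cont[OF gc])
  define C where "C = (\<Union>k<n. (\<lambda>y. y + a k) ` supp \<psi>)"
  have Cc: "compact C" unfolding C_def
    by (intro compact_UN finite_lessThan ballI compact_continuous_image[OF _ K] continuous_intros)
  have CU: "C \<subseteq> U" unfolding C_def by (rule UN_least) (use sub in simp)
  have nz: "{x. (1 / real n) * (\<Sum>k<n. \<psi> (x - a k)) \<noteq> 0} \<subseteq> C"
  proof
    fix x assume "x \<in> {x. (1 / real n) * (\<Sum>k<n. \<psi> (x - a k)) \<noteq> 0}"
    then have "(\<Sum>k<n. \<psi> (x - a k)) \<noteq> 0" by simp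
    have "\<exists>k<n. \<psi> (x - a k) \<noteq> 0"
    proof (rule ccontr)
      assume "\<not> (\<exists>k<n. \<psi> (x - a k) \<noteq> 0)"
      then have "(\<Sum>k<n. \<psi> (x - a k)) = 0" by (intro sum.neutral) auto
      with \<open>(\<Sum>k<n. \<psi> (x - a k)) \<noteq> 0\<close> show False by simp
    qed
    then obtain k where k: "k < n" "\<psi> (x - a k) \<noteq> 0" by blast
    have "x - a k \<in> supp \<psi>" using psi_zero[of "x - a k" \<psi>] k(2) by auto
    then have "x \<in> (\<lambda>y. y + a k) ` supp \<psi>" by (rule rev_image_eqI) simp
    then show "x \<in> C" unfolding C_def using k(1) by blast
  qed
  have cl: "closure {x. (1 / real n) * (\<Sum>k<n. \<psi> (x - a k)) \<noteq> 0} \<subseteq> C"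
    by (rule closure_minimal[OF nz compact_imp_closed[OF Cc]])
  have ccl: "compact (closure {x. (1 / real n) * (\<Sum>k<n. \<psi> (x - a k)) \<noteq> 0})"
    unfolding compact_eq_bounded_closed
    using cl bounded_subset[OF compact_imp_bounded[OF Cc]] by auto
  have bd: "\<bar>(1 / real n) * (\<Sum>k<n. \<psi> (x - a k))\<bar> \<le> 1" for x
  proof -
    have "\<bar>\<Sum>k<n. \<psi> (x - a k)\<bar> \<le> (\<Sum>k<n. \<bar>\<psi> (x - a k)\<bar>)" by (rule sum_abs)
    also have "\<dots> \<le> real (card {..<n}) * 1" by (rule sum_bounded_above) (use b in auto)
    finally have "\<bar>\<Sum>k<n. \<psi> (x - a k)\<bar> \<le> real n" by simp
    then show ?thesis using n by (simp add: abs_mult divide_le_eq)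
  qed
  have cU: "closure {x. (1 / real n) * (\<Sum>k<n. \<psi> (x - a k)) \<noteq> 0} \<subseteq> U" using cl CU by (rule order_trans)
  show ?thesis unfolding test_fun_def
    apply (intro conjI allI)
        apply (rule d)
       apply (rule cg)
      apply (rule ccl)
     apply (rule cU)
    apply (rule bd)
    done
qed



context setting
begin

lemma ind_meas: "indicator A \<in> borel_measurable lebesgue"
  using Ameas by (rule borel_measurable_indicator)

lemma int_ind_cont:
  fixes f :: "'a \<Rightarrow> real"
  assumes f: "continuous_on UNIV f" and S: "bounded S" and B: "\<And>x. \<bar>f x\<bar> \<le> B" and z: "\<And>x. x \<notin> S \<Longrightarrow> f x = 0"
  shows "integrable lebesgue (\<lambda>x. indicator A x * f x)"
proof (rule integrable_bdd[OF _ S])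
  show "(\<lambda>x. indicator A x * f x) \<in> borel_measurable lebesgue"
    using ind_meas cont_meas[OF f] by (rule borel_measurable_times)
  show "\<bar>indicator A x * f x\<bar> \<le> B" for x using B[of x] by (auto simp: indicator_def)
  show "x \<notin> S \<Longrightarrow> indicator A x * f x = 0" for x using z by simp
qed

lemma J_le: assumes "test_fun W \<phi> g"
  shows "ereal (LINT x:W|lebesgue. indicator A x * (g x \<bullet> u)) \<le> dir_var u A W"
  unfolding dir_var_def using assms by (intro SUP_upper2[of "(\<phi>, g)"]) auto

lemma J_eq: assumes t: "test_fun W \<phi> g"
  shows "(LINT x:W|lebesgue. indicator A x * (g x \<bullet> u)) = integral\<^sup>L lebesgue (\<lambda>x. indicator A x * (g x \<bullet> u))"
proof -
  have sW: "supp \<phi> \<subseteq> W" using t unfolding test_fun_def supp_def by auto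
  have "indicator W x *\<^sub>R (indicator A x * (g x \<bullet> u)) = indicator A x * (g x \<bullet> u)" for x
  proof (cases "x \<in> W")
    case False
    then have "x \<notin> supp \<phi>" using sW by blast
    then have "g x = 0" using grad_zero[OF test_fun_c1[OF t]] by blast
    then show ?thesis by simp
  qed simp
  then have "(\<lambda>x. indicator W x *\<^sub>R (indicator A x * (g x \<bullet> u))) = (\<lambda>x. indicator A x * (g x \<bullet> u))"
    by (rule ext)
  then show ?thesis unfolding set_lebesgue_integral_def by (simp only:)
qed

lemma test_zero: "test_fun W (\<lambda>_. 0) (\<lambda>_. 0)"
proof -
  have e: "(\<lambda>h. (0::'a) \<bullet> h) = (\<lambda>h. 0)" by (rule ext) simp
  show ?thesis unfolding test_fun_def e by simp
qed

lemma dir_var_nonneg: "0 \<le> dir_var u A W"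
proof -
  have "ereal (LINT x:W|lebesgue. indicator A x * ((\<lambda>_. 0::'a) x \<bullet> u)) \<le> dir_var u A W"
    by (rule J_le[OF test_zero])
  then show ?thesis by (simp add: zero_ereal_def)
qed

lemma J_bound:
  assumes V: "dir_var u A W = ereal M" and t: "test_fun W \<phi> g"
  shows "\<bar>integral\<^sup>L lebesgue (\<lambda>x. indicator A x * (g x \<bullet> u))\<bar> \<le> M"
proof -
  have 1: "integral\<^sup>L lebesgue (\<lambda>x. indicator A x * (g x \<bullet> u)) \<le> M"
    using J_le[OF t, of u] unfolding J_eq[OF t, of u] V by simp
  have t2: "test_fun W (\<lambda>x. - \<phi> x) (\<lambda>x. - g x)" by (rule test_fun_neg[OF t])
  have "integral\<^sup>L lebesgue (\<lambda>x. indicator A x * (- g x \<bullet> u)) \<le> M"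
    using J_le[OF t2, of u] unfolding J_eq[OF t2, of u] V by simp
  moreover have "integral\<^sup>L lebesgue (\<lambda>x. indicator A x * (- g x \<bullet> u)) = - integral\<^sup>L lebesgue (\<lambda>x. indicator A x * (g x \<bullet> u))"
  proof -
    have "(\<lambda>x. indicator A x * (- g x \<bullet> u)) = (\<lambda>x. - (indicator A x * (g x \<bullet> u)))" by (rule ext) simp
    then show ?thesis by (simp only: integral_minus)
  qed
  ultimately show ?thesis using 1 by linarith
qed


lemma outB:
  assumes Rs0: "\<forall>x\<in>supp \<psi>. norm x \<le> Rs" and x: "x \<notin> cball 0 (Rs + norm v)" and t: "0 \<le> t" "t \<le> 1"
  shows "x - t *\<^sub>R v \<notin> supp \<psi>"
proof
  assume "x - t *\<^sub>R v \<in> supp \<psi>"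
  then have a: "norm (x - t *\<^sub>R v) \<le> Rs" using Rs0 by blast
  have b: "norm x \<le> norm (t *\<^sub>R v) + norm (x - t *\<^sub>R v)" by (rule norm_triangle_sub)
  have c: "norm (t *\<^sub>R v) \<le> norm v" using t by (simp add: mult_left_le_one_le)
  from a b c have "norm x \<le> Rs + norm v" by linarith
  with x show False by simp
qed

lemma stepA:
  assumes V: "dir_var u A W = ereal M"
    and c: "c1 \<psi> g\<psi>" and Kc: "compact (supp \<psi>)" and Ks: "supp \<psi> \<subseteq> E v" and b: "\<And>x. \<bar>\<psi> x\<bar> \<le> 1"
    and v: "v = \<epsilon> *\<^sub>R u"
  shows "integral\<^sup>L lebesgue (\<lambda>x. indicator A x * (\<psi> (x - v) - \<psi> x)) \<le> \<bar>\<epsilon>\<bar> * M"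
proof -
  obtain Rs where Rs0: "\<forall>x\<in>supp \<psi>. norm x \<le> Rs" using compact_imp_bounded[OF Kc] unfolding bounded_iff by blast
  define B where "B = cball (0::'a) (Rs + norm v)"
  have oB: "x - t *\<^sub>R v \<notin> supp \<psi>" if "x \<notin> B" "0 \<le> t" "t \<le> 1" for x t
    using outB[OF Rs0, of x v t] that unfolding B_def by blast
  have oB0: "\<psi> x = 0" "\<psi> (x - v) = 0" if "x \<notin> B" for x
    using psi_zero[OF oB[OF that, of 0]] psi_zero[OF oB[OF that, of 1]] by simp_all
  define F where "F x = indicator A x * (\<psi> (x - v) - \<psi> x)" for x
  have cpsi: "continuous_on UNIV \<psi>" by (rule c1_cont[OF c])
  have Fint: "integrable lebesgue F"
    unfolding F_def
  proof (rule int_ind_cont[where S=B and B=2])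
    show "continuous_on UNIV (\<lambda>x. \<psi> (x - v) - \<psi> x)"
      by (intro continuous_on_diff shift_cont cpsi)
    show "bounded B" by (simp add: B_def)
    show "\<bar>\<psi> (x - v) - \<psi> x\<bar> \<le> 2" for x using b[of x] b[of "x - v"] by linarith
    show "x \<notin> B \<Longrightarrow> \<psi> (x - v) - \<psi> x = 0" for x using oB0 by simp
  qed
  have mB: "0 \<le> measure lebesgue B" by simp
  show ?thesis
  proof (rule field_le_epsilon)
    fix e :: real assume e: "e > 0"
    define X where "X = (norm v + 1) * (measure lebesgue B + 1)"
    have p1: "0 < norm v + 1" using norm_ge_zero[of v] by linarith
    have p2: "0 < measure lebesgue B + 1" using mB by linarith
    have X: "X > 0" unfolding X_def using p1 p2 by (rule mult_pos_pos)
    define \<eta> where "\<eta> = e / X"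
    have \<eta>: "\<eta> > 0" unfolding \<eta>_def using e X by (rule divide_pos_pos)
    obtain \<delta> where \<delta>: "\<delta> > 0" "\<And>y h. norm h < \<delta> \<Longrightarrow> \<bar>\<psi> (y + h) - \<psi> y - g\<psi> y \<bullet> h\<bar> \<le> \<eta> * norm h"
      using taylor1[OF c Kc \<eta>] by blast
    define n where "n = nat \<lceil>norm v / \<delta>\<rceil> + 1"
    have n: "n > 0" unfolding n_def by simp
    have "norm v / \<delta> < real n" unfolding n_def by linarith
    then have nd: "norm v / real n < \<delta>" using n \<delta>(1) by (simp add: field_simps)
    define a where "a k = (real k / real n) *\<^sub>R v" for k
    have sub: "(\<lambda>y. y + a k) ` supp \<psi> \<subseteq> W" if "k < n" for k
    proof
      fix z assume "z \<in> (\<lambda>y. y + a k) ` supp \<psi>"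
      then obtain y where y: "y \<in> supp \<psi>" "z = y + a k" by blast
      have "y \<in> E v" using y(1) Ks by blast
      moreover have "real k / real n \<in> {0..1}" using that n by auto
      ultimately show "z \<in> W" unfolding y(2) a_def using E_iff by blast
    qed
    define \<phi>n where "\<phi>n x = (1 / real n) * (\<Sum>k<n. \<psi> (x - a k))" for x
    define gn where "gn x = (1 / real n) *\<^sub>R (\<Sum>k<n. g\<psi> (x - a k))" for x
    have tn: "test_fun W \<phi>n gn"
      unfolding \<phi>n_def gn_def by (rule avg_test[OF c Kc b n sub])
    define G where "G x = indicator A x * (gn x \<bullet> u)" for x
    have JG: "\<bar>integral\<^sup>L lebesgue G\<bar> \<le> M" using J_bound[OF V tn] unfolding G_def .
    have cKn: "compact (supp \<phi>n)" using tn unfolding test_fun_def supp_def by blast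
    obtain Bg where Bg: "\<And>x. norm (gn x) \<le> Bg" using grad_bounded[OF test_fun_c1[OF tn] cKn] by blast
    have ak: "0 \<le> real k / real n" "real k / real n \<le> 1" if "k \<le> n" for k using that n by auto
    have gn0: "gn x = 0" if "x \<notin> B" for x
    proof -
      have "g\<psi> (x - a k) = 0" if "k < n" for k
        using grad_zero[OF c oB[OF \<open>x \<notin> B\<close> ak[of k]]] that unfolding a_def by simp
      then show ?thesis unfolding gn_def by simp
    qed
    have Gint: "integrable lebesgue G"
      unfolding G_def
    proof (rule int_ind_cont[where S=B and B="Bg * norm u"])
      show "continuous_on UNIV (\<lambda>x. gn x \<bullet> u)"
        using tn unfolding test_fun_def by (intro continuous_intros) auto
      show "bounded B" by (simp add: B_def)
      show "\<bar>gn x \<bullet> u\<bar> \<le> Bg * norm u" for x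
      proof -
        have "\<bar>gn x \<bullet> u\<bar> \<le> norm (gn x) * norm u" by (rule Cauchy_Schwarz_ineq2)
        also have "\<dots> \<le> Bg * norm u" by (rule mult_right_mono[OF Bg norm_ge_zero])
        finally show ?thesis .
      qed
      show "x \<notin> B \<Longrightarrow> gn x \<bullet> u = 0" for x using gn0 by simp
    qed
    define D where "D x = F x + \<epsilon> * G x" for x
    have Dint: "integrable lebesgue D" unfolding D_def using Fint Gint by auto
    have Dpt: "D x \<le> \<eta> * norm v * indicator B x" for x
    proof (cases "x \<in> B")
      case False
      then have "D x = 0" unfolding D_def F_def G_def using oB0[OF False] gn0[OF False] by simp
      then show ?thesis using False by simp
    next
      case True
      define R where "R k = \<psi> (x - a (Suc k)) - \<psi> (x - a k) - g\<psi> (x - a k) \<bullet> (- (1 / real n) *\<^sub>R v)" for k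
      have an: "a n = v" "a 0 = 0" unfolding a_def using n by auto
      have tel0: "(\<Sum>k<n. \<psi> (x - a (Suc k)) - \<psi> (x - a k)) = \<psi> (x - a n) - \<psi> (x - a 0)"
        by (rule sum_lessThan_telescope)
      have tel: "(\<Sum>k<n. \<psi> (x - a (Suc k)) - \<psi> (x - a k)) = \<psi> (x - v) - \<psi> x"
        using tel0 an by (simp only: diff_zero)
      have gsum: "(\<Sum>k<n. g\<psi> (x - a k) \<bullet> (- (1 / real n) *\<^sub>R v)) = - (\<epsilon> * (gn x \<bullet> u))"
        unfolding gn_def v by (simp add: inner_sum_left sum_negf sum_distrib_left algebra_simps)
      have "(\<Sum>k<n. R k) = (\<Sum>k<n. \<psi> (x - a (Suc k)) - \<psi> (x - a k)) - (\<Sum>k<n. g\<psi> (x - a k) \<bullet> (- (1 / real n) *\<^sub>R v))"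
        unfolding R_def by (rule sum_subtractf)
      then have Rsum: "(\<Sum>k<n. R k) = (\<psi> (x - v) - \<psi> x) + \<epsilon> * (gn x \<bullet> u)"
        unfolding tel gsum by simp
      have Dx: "D x = indicator A x * (\<Sum>k<n. R k)"
        unfolding D_def F_def G_def Rsum by (simp add: algebra_simps)
      have Rb: "\<bar>R k\<bar> \<le> \<eta> * (norm v / real n)" for k
      proof -
        have h: "norm (- (1 / real n) *\<^sub>R v) = norm v / real n" using n by simp
        have q: "real (Suc k) / real n = real k / real n + 1 / real n" by (simp add: add_divide_distrib)
        have q2: "a (Suc k) = a k + (1 / real n) *\<^sub>R v" unfolding a_def q by (rule scaleR_add_left)
        have s: "x - a k + - (1 / real n) *\<^sub>R v = x - a (Suc k)"
          unfolding q2 by (simp add: algebra_simps)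
        have "\<bar>\<psi> (x - a k + - (1 / real n) *\<^sub>R v) - \<psi> (x - a k) - g\<psi> (x - a k) \<bullet> (- (1 / real n) *\<^sub>R v)\<bar>
              \<le> \<eta> * norm (- (1 / real n) *\<^sub>R v)"
          by (rule \<delta>(2)) (simp add: h nd)
        then show ?thesis unfolding R_def s h .
      qed
      have "\<bar>D x\<bar> \<le> \<bar>\<Sum>k<n. R k\<bar>" unfolding Dx by (simp add: abs_mult indicator_def)
      also have "\<dots> \<le> (\<Sum>k<n. \<bar>R k\<bar>)" by (rule sum_abs)
      also have "\<dots> \<le> real (card {..<n}) * (\<eta> * (norm v / real n))" by (rule sum_bounded_above) (rule Rb)
      also have "\<dots> = \<eta> * norm v" using n by simp
      finally show ?thesis using True by simp
    qed
    have Bm: "B \<in> lmeasurable" by (simp add: B_def lmeasurable_cball)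
    then have "emeasure lebesgue B < \<infinity>" unfolding fmeasurable_def by blast
    then have Iint: "integrable lebesgue (\<lambda>x. \<eta> * norm v * indicator B x)"
      using Bm by (intro integrable_mult_right integrable_real_indicator) auto
    have "integral\<^sup>L lebesgue D \<le> integral\<^sup>L lebesgue (\<lambda>x. \<eta> * norm v * indicator B x)"
      by (rule integral_mono[OF Dint Iint Dpt])
    also have "\<dots> = \<eta> * norm v * measure lebesgue B"
      by (simp add: B_def)
    finally have ID: "integral\<^sup>L lebesgue D \<le> \<eta> * norm v * measure lebesgue B" .
    have IF: "integral\<^sup>L lebesgue F = integral\<^sup>L lebesgue D - \<epsilon> * integral\<^sup>L lebesgue G"
    proof -
      have "integral\<^sup>L lebesgue D = integral\<^sup>L lebesgue F + integral\<^sup>L lebesgue (\<lambda>x. \<epsilon> * G x)"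
        unfolding D_def using Bochner_Integration.integral_add[OF Fint integrable_mult_right[OF Gint]] by simp
      then show ?thesis by simp
    qed
    have "- (\<epsilon> * integral\<^sup>L lebesgue G) \<le> \<bar>\<epsilon>\<bar> * M"
    proof -
      have "- (\<epsilon> * integral\<^sup>L lebesgue G) \<le> \<bar>\<epsilon>\<bar> * \<bar>integral\<^sup>L lebesgue G\<bar>"
        by (simp add: abs_mult[symmetric])
      also have "\<dots> \<le> \<bar>\<epsilon>\<bar> * M" using JG by (simp add: mult_left_mono)
      finally show ?thesis .
    qed
    moreover have "\<eta> * norm v * measure lebesgue B \<le> e"
    proof -
      have "norm v * measure lebesgue B \<le> X"
        unfolding X_def using mB by (simp add: algebra_simps)
      then have "\<eta> * (norm v * measure lebesgue B) \<le> \<eta> * X"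
        using \<eta> by (intro mult_left_mono) auto
      also have "\<dots> = e" unfolding \<eta>_def using X by simp
      finally show ?thesis by (simp add: mult.assoc)
    qed
    ultimately show "integral\<^sup>L lebesgue (\<lambda>x. indicator A x * (\<psi> (x - v) - \<psi> x)) \<le> \<bar>\<epsilon>\<bar> * M + e"
      using IF ID unfolding F_def by linarith
  qed
qed

end


lemma inner_approx:
  fixes S :: "'a::euclidean_space set"
  assumes S: "S \<in> lmeasurable" "bounded S" and e: "e > 0"
  obtains T where "compact T" "T \<subseteq> S" "measure lebesgue S \<le> measure lebesgue T + e"
proof -
  obtain T where T: "closed T" "T \<subseteq> S" "S - T \<in> lmeasurable" "emeasure lebesgue (S - T) < ennreal e"
    using sets_lebesgue_inner_closed[OF fmeasurableD[OF S(1)] e] by blast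
  have "ennreal (measure lebesgue (S - T)) < ennreal e" using T(4) emeasure_eq_measure2[OF T(3)] by simp
  then have m: "measure lebesgue (S - T) < e" by (simp add: ennreal_less_iff)
  have "measure lebesgue (S - T) = measure lebesgue S - measure lebesgue T"
    by (rule measurable_measure_Diff[OF S(1) _ T(2)]) (simp add: T(1) borel_closed)
  moreover have "compact T" using T(1) bounded_subset[OF S(2) T(2)] by (simp add: compact_eq_bounded_closed)
  ultimately show ?thesis using that[of T] T(2) m by linarith
qed

lemma outer_approx:
  fixes T :: "'a::euclidean_space set"
  assumes T: "compact T" and e: "e > 0"
  obtains Op where "open Op" "T \<subseteq> Op" "Op - T \<in> lmeasurable" "measure lebesgue (Op - T) < e"
proof -
  have "T \<in> sets lebesgue" using T by (simp add: compact_imp_closed borel_closed)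
  then obtain Op where Op: "open Op" "T \<subseteq> Op" "Op - T \<in> lmeasurable" "emeasure lebesgue (Op - T) < ennreal e"
    using sets_lebesgue_outer_open[OF _ e] by blast
  have "ennreal (measure lebesgue (Op - T)) < ennreal e" using Op(4) emeasure_eq_measure2[OF Op(3)] by simp
  then have m: "measure lebesgue (Op - T) < e" by (simp add: ennreal_less_iff)
  then show ?thesis using that Op by blast
qed

context setting
begin

lemma ind_shift: "(\<lambda>y. indicator A (y + v) :: real) = indicator {y. y + v \<in> A}"
  by (auto simp: indicator_def fun_eq_iff)

lemma integral_shift_form:
  assumes c: "c1 \<psi> g" and Kc: "compact (supp \<psi>)"
  shows "integral\<^sup>L lebesgue (\<lambda>x. indicator A x * (\<psi> (x - v) - \<psi> x))
       = integral\<^sup>L lebesgue (\<lambda>y. (indicator A (y + v) - indicator A y) * \<psi> y)"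
proof -
  obtain Rs where Rs0: "\<forall>x\<in>supp \<psi>. norm x \<le> Rs" using compact_imp_bounded[OF Kc] unfolding bounded_iff by blast
  obtain Bp where Bp: "\<And>x. \<bar>\<psi> x\<bar> \<le> Bp" using psi_bounded[OF c Kc] by blast
  define B where "B = cball (0::'a) (Rs + norm v)"
  have oB: "x - t *\<^sub>R v \<notin> supp \<psi>" if "x \<notin> B" "0 \<le> t" "t \<le> 1" for x t
    using outB[OF Rs0, of x v t] that unfolding B_def by blast
  have oB0: "\<psi> x = 0" "\<psi> (x - v) = 0" if "x \<notin> B" for x
    using psi_zero[OF oB[OF that, of 0]] psi_zero[OF oB[OF that, of 1]] by simp_all
  have cpsi: "continuous_on UNIV \<psi>" by (rule c1_cont[OF c])
  have bB: "bounded B" by (simp add: B_def)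
  have i1: "integrable lebesgue (\<lambda>x. indicator A x * \<psi> (x - v))"
    by (rule int_ind_cont[OF shift_cont[OF cpsi] bB Bp]) (use oB0 in simp)
  have i2: "integrable lebesgue (\<lambda>x. indicator A x * \<psi> x)"
    by (rule int_ind_cont[OF cpsi bB Bp]) (use oB0 in simp)
  have m3: "(\<lambda>y. indicator A (y + v) * \<psi> y) \<in> borel_measurable lebesgue"
  proof -
    have "(\<lambda>y. indicator {y. y + v \<in> A} y * \<psi> y) \<in> borel_measurable lebesgue"
      using borel_measurable_indicator[OF shiftA_meas[of v]] cont_meas[OF cpsi] by (rule borel_measurable_times)
    then show ?thesis by (simp add: indicator_def)
  qed
  have i3: "integrable lebesgue (\<lambda>y. indicator A (y + v) * \<psi> y)"
  proof (rule integrable_bdd[OF m3 bB])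
    show "\<bar>indicator A (x + v) * \<psi> x\<bar> \<le> Bp" for x using Bp[of x] by (auto simp: indicator_def)
    show "x \<notin> B \<Longrightarrow> indicator A (x + v) * \<psi> x = 0" for x using oB0 by simp
  qed
  have tr: "integral\<^sup>L lebesgue (\<lambda>x. indicator A x * \<psi> (x - v)) = integral\<^sup>L lebesgue (\<lambda>y. indicator A (y + v) * \<psi> y)"
    using lebesgue_integral_translate[OF m3, of "- v"] by simp
  have "integral\<^sup>L lebesgue (\<lambda>x. indicator A x * (\<psi> (x - v) - \<psi> x))
      = integral\<^sup>L lebesgue (\<lambda>x. indicator A x * \<psi> (x - v)) - integral\<^sup>L lebesgue (\<lambda>x. indicator A x * \<psi> x)"
    using Bochner_Integration.integral_diff[OF i1 i2] by (simp add: algebra_simps)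
  also have "\<dots> = integral\<^sup>L lebesgue (\<lambda>y. indicator A (y + v) * \<psi> y) - integral\<^sup>L lebesgue (\<lambda>x. indicator A x * \<psi> x)"
    using tr by simp
  also have "\<dots> = integral\<^sup>L lebesgue (\<lambda>y. (indicator A (y + v) - indicator A y) * \<psi> y)"
    using Bochner_Integration.integral_diff[OF i3 i2] by (simp add: algebra_simps)
  finally show ?thesis .
qed


lemma Nset_sub: "Nset v \<subseteq> E v" and Pset_sub: "Pset v \<subseteq> E v"
  unfolding Nset_def Pset_def by auto

lemma stepB:
  assumes e: "e > 0"
  obtains \<psi> g\<psi> where "c1 \<psi> g\<psi>" "compact (supp \<psi>)" "supp \<psi> \<subseteq> E v" "\<And>x. \<bar>\<psi> x\<bar> \<le> 1"
    "measure lebesgue (Nset v) + measure lebesgue (Pset v) - e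
       \<le> integral\<^sup>L lebesgue (\<lambda>x. indicator A x * (\<psi> (x - v) - \<psi> x))"
proof -
  define \<eta> where "\<eta> = e / 4"
  have \<eta>: "\<eta> > 0" unfolding \<eta>_def using e by simp
  obtain TP where TP: "compact TP" "TP \<subseteq> Pset v" "measure lebesgue (Pset v) \<le> measure lebesgue TP + \<eta>"
    using inner_approx[OF Pset_meas bounded_subset[OF E_bounded Pset_sub] \<eta>] by blast
  obtain TN where TN: "compact TN" "TN \<subseteq> Nset v" "measure lebesgue (Nset v) \<le> measure lebesgue TN + \<eta>"
    using inner_approx[OF Nset_meas bounded_subset[OF E_bounded Nset_sub] \<eta>] by blast
  obtain OP where OP: "open OP" "TP \<subseteq> OP" "OP - TP \<in> lmeasurable" "measure lebesgue (OP - TP) < \<eta>"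
    using outer_approx[OF TP(1) \<eta>] by blast
  obtain ON where ON: "open ON" "TN \<subseteq> ON" "ON - TN \<in> lmeasurable" "measure lebesgue (ON - TN) < \<eta>"
    using outer_approx[OF TN(1) \<eta>] by blast
  have disj: "TP \<inter> TN = {}" using TP(2) TN(2) unfolding Pset_def Nset_def by blast
  obtain U1 V1 where UV: "open U1" "open V1" "TP \<subseteq> U1" "TN \<subseteq> V1" "U1 \<inter> V1 = {}"
    using separation_normal_compact[OF TP(1) compact_imp_closed[OF TN(1)] disj] by metis
  define UP where "UP = OP \<inter> E v \<inter> U1"
  define UNn where "UNn = ON \<inter> E v \<inter> V1"
  have oUP: "open UP" unfolding UP_def using OP(1) UV(1) E_open by blast
  have oUN: "open UNn" unfolding UNn_def using ON(1) UV(2) E_open by blast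
  have TPU: "TP \<subseteq> UP" unfolding UP_def using OP(2) UV(3) TP(2) Pset_sub by blast
  have TNU: "TN \<subseteq> UNn" unfolding UNn_def using ON(2) UV(4) TN(2) Nset_sub by blast
  have UPN: "UP \<inter> UNn = {}" unfolding UP_def UNn_def using UV(5) by blast
  obtain chP gP where P: "c1 chP gP" "\<And>x. 0 \<le> chP x \<and> chP x \<le> 1" "\<And>x. x \<in> TP \<Longrightarrow> chP x = 1"
    "compact (supp chP)" "supp chP \<subseteq> UP"
    using smooth_urysohn[OF TP(1) oUP TPU] by blast
  obtain chN gN where N: "c1 chN gN" "\<And>x. 0 \<le> chN x \<and> chN x \<le> 1" "\<And>x. x \<in> TN \<Longrightarrow> chN x = 1"
    "compact (supp chN)" "supp chN \<subseteq> UNn"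
    using smooth_urysohn[OF TN(1) oUN TNU] by blast
  define \<psi> where "\<psi> x = chP x - chN x" for x
  define g\<psi> where "g\<psi> x = gP x - gN x" for x
  have nzP: "chP x = 0" if "x \<notin> UP" for x using psi_zero[of x chP] P(5) that by blast
  have nzN: "chN x = 0" if "x \<notin> UNn" for x using psi_zero[of x chN] N(5) that by blast
  have c: "c1 \<psi> g\<psi>"
  proof -
    have "((\<lambda>x. chP x - chN x) has_derivative (\<lambda>h. gP x \<bullet> h - gN x \<bullet> h)) (at x)" for x
      using P(1) N(1) unfolding c1_def by (intro has_derivative_diff) auto
    moreover have "(\<lambda>h. gP x \<bullet> h - gN x \<bullet> h) = (\<lambda>h. g\<psi> x \<bullet> h)" for x
      by (simp add: g\<psi>_def inner_diff_left)
    moreover have "continuous_on UNIV g\<psi>" unfolding g\<psi>_def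
      using P(1) N(1) unfolding c1_def by (intro continuous_on_diff) auto
    ultimately show ?thesis unfolding c1_def \<psi>_def by simp
  qed
  have suppsub: "supp \<psi> \<subseteq> supp chP \<union> supp chN"
  proof -
    have "{x. \<psi> x \<noteq> 0} \<subseteq> {x. chP x \<noteq> 0} \<union> {x. chN x \<noteq> 0}" unfolding \<psi>_def by auto
    then have "supp \<psi> \<subseteq> closure ({x. chP x \<noteq> 0} \<union> {x. chN x \<noteq> 0})" unfolding supp_def by (rule closure_mono)
    then show ?thesis unfolding supp_def closure_Un .
  qed
  have Kc: "compact (supp \<psi>)"
  proof -
    have "compact (supp chP \<union> supp chN)" using P(4) N(4) by (rule compact_Un)
    moreover have "closed (supp \<psi>)" unfolding supp_def by simp
    ultimately show ?thesis using suppsub compact_eq_bounded_closed bounded_subset by metis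
  qed
  have Ks: "supp \<psi> \<subseteq> E v" using suppsub P(5) N(5) unfolding UP_def UNn_def by blast
  have b: "\<bar>\<psi> x\<bar> \<le> 1" for x
  proof (cases "x \<in> UP")
    case True
    then have "x \<notin> UNn" using UPN by blast
    then show ?thesis using nzN P(2)[of x] unfolding \<psi>_def by simp
  next
    case False
    then show ?thesis using nzP N(2)[of x] unfolding \<psi>_def by simp
  qed
  define R :: "'a \<Rightarrow> real" where "R y = indicator TP y + indicator TN y - indicator (UP - TP) y - indicator (UNn - TN) y" for y :: 'a
  have pt: "R y \<le> (indicator A (y + v) - indicator A y) * \<psi> y" for y
  proof -
    consider "y \<in> TP" | "y \<in> TN" | "y \<in> UP - TP" | "y \<in> UNn - TN" | "y \<notin> UP \<and> y \<notin> UNn"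
      using TPU TNU by blast
    then show ?thesis
    proof cases
      case 1
      then have "y \<notin> UNn" "y \<notin> TN" using TPU UPN TNU by blast+
      moreover have "y \<notin> A" "y + v \<in> A" using 1 TP(2) unfolding Pset_def by auto
      ultimately show ?thesis using 1 P(3)[OF 1] nzN unfolding R_def \<psi>_def by simp
    next
      case 2
      then have "y \<notin> UP" "y \<notin> TP" using TNU UPN TPU by blast+
      moreover have "y \<in> A" "y + v \<notin> A" using 2 TN(2) unfolding Nset_def by auto
      ultimately show ?thesis using 2 N(3)[OF 2] nzP unfolding R_def \<psi>_def by simp
    next
      case 3
      then have "y \<notin> UNn" "y \<notin> TN" "y \<notin> TP" using TNU UPN by blast+
      then have "R y = -1" "\<psi> y = chP y" using 3 nzN unfolding R_def \<psi>_def by simp_all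
      moreover have "0 \<le> chP y" "chP y \<le> 1" using P(2) by auto
      ultimately show ?thesis by (auto simp: indicator_def)
    next
      case 4
      then have "y \<notin> UP" "y \<notin> TP" "y \<notin> TN" using TPU UPN by blast+
      then have "R y = -1" "\<psi> y = - chN y" using 4 nzP unfolding R_def \<psi>_def by simp_all
      moreover have "0 \<le> chN y" "chN y \<le> 1" using N(2) by auto
      ultimately show ?thesis by (auto simp: indicator_def)
    next
      case 5
      then have "y \<notin> TP" "y \<notin> TN" using TPU TNU by blast+
      then show ?thesis using 5 nzP nzN unfolding R_def \<psi>_def by simp
    qed
  qed
  have mTP: "TP \<in> lmeasurable" using TP(1) by (rule lmeasurable_compact)
  have mTN: "TN \<in> lmeasurable" using TN(1) by (rule lmeasurable_compact)
  have bUP: "bounded UP" unfolding UP_def using E_bounded bounded_subset by blast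
  have bUN: "bounded UNn" unfolding UNn_def using E_bounded bounded_subset by blast
  have mUP: "UP - TP \<in> lmeasurable"
    by (intro bounded_set_imp_lmeasurable) (use bUP oUP TP(1) in \<open>auto intro: bounded_subset simp: borel_open borel_compact sets.Diff\<close>)
  have mUN: "UNn - TN \<in> lmeasurable"
    by (intro bounded_set_imp_lmeasurable) (use bUN oUN TN(1) in \<open>auto intro: bounded_subset simp: borel_open borel_compact sets.Diff\<close>)
  have lUP: "measure lebesgue (UP - TP) \<le> measure lebesgue (OP - TP)"
    by (rule measure_mono_fmeasurable[OF _ fmeasurableD[OF mUP] OP(3)]) (auto simp: UP_def)
  have lUN: "measure lebesgue (UNn - TN) \<le> measure lebesgue (ON - TN)"
    by (rule measure_mono_fmeasurable[OF _ fmeasurableD[OF mUN] ON(3)]) (auto simp: UNn_def)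
  have iTP: "integrable lebesgue (indicator TP :: 'a \<Rightarrow> real)" using mTP
    by (intro integrable_real_indicator) (auto simp: fmeasurable_def)
  have iTN: "integrable lebesgue (indicator TN :: 'a \<Rightarrow> real)" using mTN
    by (intro integrable_real_indicator) (auto simp: fmeasurable_def)
  have iUP: "integrable lebesgue (indicator (UP - TP) :: 'a \<Rightarrow> real)" using mUP
    by (intro integrable_real_indicator) (auto simp: fmeasurable_def)
  have iUN: "integrable lebesgue (indicator (UNn - TN) :: 'a \<Rightarrow> real)" using mUN
    by (intro integrable_real_indicator) (auto simp: fmeasurable_def)
  have iR: "integrable lebesgue R" unfolding R_def using iTP iTN iUP iUN by auto
  have intR: "integral\<^sup>L lebesgue R = measure lebesgue TP + measure lebesgue TN - measure lebesgue (UP - TP) - measure lebesgue (UNn - TN)"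
    unfolding R_def using iTP iTN iUP iUN by (simp add: Bochner_Integration.integral_diff Bochner_Integration.integral_add)
  obtain Bp where Bp: "\<And>x. \<bar>\<psi> x\<bar> \<le> Bp" using psi_bounded[OF c Kc] by blast
  have iL: "integrable lebesgue (\<lambda>y. (indicator A (y + v) - indicator A y) * \<psi> y)"
  proof -
    have "integral\<^sup>L lebesgue (\<lambda>x. indicator A x * (\<psi> (x - v) - \<psi> x)) = integral\<^sup>L lebesgue (\<lambda>y. (indicator A (y + v) - indicator A y) * \<psi> y)"
      by (rule integral_shift_form[OF c Kc])
    obtain Rs where Rs0: "\<forall>x\<in>supp \<psi>. norm x \<le> Rs" using compact_imp_bounded[OF Kc] unfolding bounded_iff by blast
    have m: "(\<lambda>y. (indicator A (y + v) - indicator A y) * \<psi> y) \<in> borel_measurable lebesgue"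
    proof -
      have "(\<lambda>y. (indicator {y. y + v \<in> A} y - indicator A y) * \<psi> y) \<in> borel_measurable lebesgue"
        by (intro borel_measurable_times borel_measurable_diff borel_measurable_indicator shiftA_meas Ameas
            cont_meas[OF c1_cont[OF c]])
      then show ?thesis by (simp add: indicator_def)
    qed
    show ?thesis
    proof (rule integrable_bdd[OF m, of "cball 0 Rs" "2 * Bp"])
      show "\<bar>(indicator A (x + v) - indicator A x) * \<psi> x\<bar> \<le> 2 * Bp" for x
        using Bp[of x] by (auto simp: indicator_def abs_mult)
      show "x \<notin> cball 0 Rs \<Longrightarrow> (indicator A (x + v) - indicator A x) * \<psi> x = 0" for x
        using psi_zero[of x \<psi>] Rs0 by auto
    qed simp
  qed
  have "integral\<^sup>L lebesgue R \<le> integral\<^sup>L lebesgue (\<lambda>y. (indicator A (y + v) - indicator A y) * \<psi> y)"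
    by (rule integral_mono[OF iR iL pt])
  also have "\<dots> = integral\<^sup>L lebesgue (\<lambda>x. indicator A x * (\<psi> (x - v) - \<psi> x))"
    by (rule integral_shift_form[OF c Kc, symmetric])
  finally have "integral\<^sup>L lebesgue R \<le> integral\<^sup>L lebesgue (\<lambda>x. indicator A x * (\<psi> (x - v) - \<psi> x))" .
  then have "measure lebesgue (Nset v) + measure lebesgue (Pset v) - e
       \<le> integral\<^sup>L lebesgue (\<lambda>x. indicator A x * (\<psi> (x - v) - \<psi> x))"
    using intR TP(3) TN(3) lUP lUN OP(4) ON(4) unfolding \<eta>_def by linarith
  then show ?thesis using that[OF c Kc Ks b] by blast
qed


lemma NP_le:
  assumes V: "dir_var u A W = ereal M" and v: "v = \<epsilon> *\<^sub>R u"
  shows "measure lebesgue (Nset v) + measure lebesgue (Pset v) \<le> \<bar>\<epsilon>\<bar> * M"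
proof (rule field_le_epsilon)
  fix e :: real assume e: "e > 0"
  obtain \<psi> g\<psi> where c: "c1 \<psi> g\<psi>" "compact (supp \<psi>)" "supp \<psi> \<subseteq> E v" "\<And>x. \<bar>\<psi> x\<bar> \<le> 1"
    and le: "measure lebesgue (Nset v) + measure lebesgue (Pset v) - e
       \<le> integral\<^sup>L lebesgue (\<lambda>x. indicator A x * (\<psi> (x - v) - \<psi> x))"
    using stepB[OF e, of v] by blast
  have "integral\<^sup>L lebesgue (\<lambda>x. indicator A x * (\<psi> (x - v) - \<psi> x)) \<le> \<bar>\<epsilon>\<bar> * M"
    by (rule stepA[OF V c v])
  with le show "measure lebesgue (Nset v) + measure lebesgue (Pset v) \<le> \<bar>\<epsilon>\<bar> * M + e" by linarith
qed

lemma sigma_le: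
  assumes u: "norm u = 1" and ez: "\<epsilon> \<noteq> 0"
  shows "ereal (sigma_cov (\<epsilon> *\<^sub>R u) W A) \<le> dir_var u A W"
proof (cases "dir_var u A W")
  case (real M)
  define v where "v = \<epsilon> *\<^sub>R u"
  have nv: "norm v = \<bar>\<epsilon>\<bar>" unfolding v_def using u by simp
  have "measure lebesgue (Nset v) + measure lebesgue (Pset v) \<le> \<bar>\<epsilon>\<bar> * M"
    by (rule NP_le[OF real v_def])
  then have "(measure lebesgue (Nset v) + measure lebesgue (Nset (-v))) / norm v \<le> M"
    unfolding Pset_measure nv using ez by (simp add: divide_le_eq mult.commute)
  then show ?thesis unfolding sigma_eq v_def[symmetric] using real by simp
next
  case PInf then show ?thesis by simp
next
  case MInf then show ?thesis using dir_var_nonneg[of u] by simp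
qed


lemma stepD:
  assumes u: "norm u = 1" and t: "test_fun W \<phi> g" and e: "e > 0"
  shows "eventually (\<lambda>\<epsilon>. integral\<^sup>L lebesgue (\<lambda>x. indicator A x * (g x \<bullet> u)) - e \<le> sigma_cov (\<epsilon> *\<^sub>R u) W A) (at 0)"
proof -
  define J where "J = integral\<^sup>L lebesgue (\<lambda>x. indicator A x * (g x \<bullet> u))"
  have c: "c1 \<phi> g" by (rule test_fun_c1[OF t])
  have Kc: "compact (supp \<phi>)" and sW: "supp \<phi> \<subseteq> W" using t unfolding test_fun_def supp_def by auto
  obtain d0 where d0: "d0 > 0" "(\<Union>s\<in>supp \<phi>. cball s d0) \<subseteq> W"
    using compact_subset_open_imp_cball_epsilon_subset[OF Kc oW sW] by blast
  have sE: "supp \<phi> \<subseteq> E w" if "norm w < d0" for w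
  proof
    fix s assume s: "s \<in> supp \<phi>"
    show "s \<in> E w" unfolding E_iff
    proof
      fix t :: real assume "t \<in> {0..1}"
      then have "norm (t *\<^sub>R w) \<le> norm w" by (simp add: mult_left_le_one_le)
      then have "s + t *\<^sub>R w \<in> cball s d0" using that by (simp add: dist_norm)
      then show "s + t *\<^sub>R w \<in> W" using d0(2) s by blast
    qed
  qed
  obtain Rs where Rs0: "\<forall>x\<in>supp \<phi>. norm x \<le> Rs" using compact_imp_bounded[OF Kc] unfolding bounded_iff by blast
  define B where "B = cball (0::'a) (Rs + 1)"
  have bB: "bounded B" by (simp add: B_def)
  have Bm: "B \<in> lmeasurable" by (simp add: B_def lmeasurable_cball)
  then have "emeasure lebesgue B < \<infinity>" unfolding fmeasurable_def by blast
  then have Iint: "integrable lebesgue (\<lambda>x. c * indicator B x :: real)" for c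
    using Bm by (intro integrable_mult_right integrable_real_indicator) auto
  have mB: "0 \<le> measure lebesgue B" by simp
  define \<eta> where "\<eta> = e / (measure lebesgue B + 1)"
  have p2: "0 < measure lebesgue B + 1" using mB by linarith
  have \<eta>: "\<eta> > 0" unfolding \<eta>_def using e p2 by (intro divide_pos_pos) auto
  have \<eta>e: "\<eta> * measure lebesgue B \<le> e"
  proof -
    have "\<eta> * measure lebesgue B \<le> \<eta> * (measure lebesgue B + 1)" using \<eta> by simp
    also have "\<dots> = e" unfolding \<eta>_def using p2 by simp
    finally show ?thesis .
  qed
  obtain \<delta> where \<delta>: "\<delta> > 0" "\<And>y h. norm h < \<delta> \<Longrightarrow> \<bar>\<phi> (y + h) - \<phi> y - g y \<bullet> h\<bar> \<le> \<eta> * norm h"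
    using taylor1[OF c Kc \<eta>] by blast
  obtain Bg where Bg: "\<And>x. norm (g x) \<le> Bg" using grad_bounded[OF c Kc] by blast
  obtain Bp where Bp: "\<And>x. \<bar>\<phi> x\<bar> \<le> Bp" using psi_bounded[OF c Kc] by blast
  have cphi: "continuous_on UNIV \<phi>" by (rule c1_cont[OF c])
  have cg: "continuous_on UNIV g" using c unfolding c1_def by auto
  have g0: "g x = 0" if "x \<notin> B" for x
    using grad_zero[OF c] Rs0 that unfolding B_def by force
  have p0: "\<phi> x = 0" if "x \<notin> B" for x
    using psi_zero[of x \<phi>] Rs0 that unfolding B_def by force
  have Gint: "integrable lebesgue (\<lambda>x. indicator A x * (g x \<bullet> u))"
  proof (rule int_ind_cont[OF _ bB, of _ "Bg * norm u"])
    show "continuous_on UNIV (\<lambda>x. g x \<bullet> u)" using cg by (intro continuous_intros) auto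
    show "\<bar>g x \<bullet> u\<bar> \<le> Bg * norm u" for x
    proof -
      have "\<bar>g x \<bullet> u\<bar> \<le> norm (g x) * norm u" by (rule Cauchy_Schwarz_ineq2)
      also have "\<dots> \<le> Bg * norm u" by (rule mult_right_mono[OF Bg norm_ge_zero])
      finally show ?thesis .
    qed
    show "x \<notin> B \<Longrightarrow> g x \<bullet> u = 0" for x using g0 by simp
  qed
  have ev: "eventually (\<lambda>\<epsilon>::real. \<epsilon> \<noteq> 0 \<and> \<bar>\<epsilon>\<bar> < min d0 (min \<delta> 1)) (at 0)"
    unfolding eventually_at using d0(1) \<delta>(1) by (intro exI[of _ "min d0 (min \<delta> 1)"]) (auto simp: dist_norm)
  show ?thesis
  proof (rule eventually_mono[OF ev], elim conjE)
    fix \<epsilon> :: real assume ez: "\<epsilon> \<noteq> 0" and es: "\<bar>\<epsilon>\<bar> < min d0 (min \<delta> 1)"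
    define w where "w = - (\<epsilon> *\<^sub>R u)"
    have nw: "norm w = \<bar>\<epsilon>\<bar>" unfolding w_def using u by simp
    have sEw: "supp \<phi> \<subseteq> E w" using sE nw es by simp
    have pw0: "\<phi> (x - w) = 0" if "x \<notin> B" for x
    proof -
      have "norm x > Rs + 1" using that unfolding B_def by simp
      moreover have "norm x \<le> norm w + norm (x - w)" by (rule norm_triangle_sub)
      ultimately have "norm (x - w) > Rs" using nw es by linarith
      then show ?thesis using psi_zero[of "x - w" \<phi>] Rs0 by force
    qed
    define Q where "Q = integral\<^sup>L lebesgue (\<lambda>x. indicator A x * (\<phi> (x - w) - \<phi> x))"
    have Qint: "integrable lebesgue (\<lambda>x. indicator A x * (\<phi> (x - w) - \<phi> x))"
    proof (rule int_ind_cont[OF _ bB, of _ "2 * Bp"])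
      show "continuous_on UNIV (\<lambda>x. \<phi> (x - w) - \<phi> x)" by (intro continuous_on_diff shift_cont cphi)
      show "\<bar>\<phi> (x - w) - \<phi> x\<bar> \<le> 2 * Bp" for x using Bp[of x] Bp[of "x - w"] by linarith
      show "x \<notin> B \<Longrightarrow> \<phi> (x - w) - \<phi> x = 0" for x using p0 pw0 by simp
    qed
    have Qb: "\<bar>Q\<bar> \<le> \<bar>\<epsilon>\<bar> * sigma_cov (\<epsilon> *\<^sub>R u) W A"
    proof -
      have Q2: "Q = integral\<^sup>L lebesgue (\<lambda>y. (indicator A (y + w) - indicator A y) * \<phi> y)"
        unfolding Q_def by (rule integral_shift_form[OF c Kc])
      have iNP: "integrable lebesgue (\<lambda>y. indicator (Nset w) y + indicator (Pset w) y :: real)"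
        using Nset_meas[of w] Pset_meas[of w]
        by (intro Bochner_Integration.integrable_add integrable_real_indicator) (auto simp: fmeasurable_def)
      have iQ: "integrable lebesgue (\<lambda>y. (indicator A (y + w) - indicator A y) * \<phi> y)"
      proof -
        have m: "(\<lambda>y. (indicator A (y + w) - indicator A y) * \<phi> y) \<in> borel_measurable lebesgue"
        proof -
          have "(\<lambda>y. (indicator {y. y + w \<in> A} y - indicator A y) * \<phi> y) \<in> borel_measurable lebesgue"
            by (intro borel_measurable_times borel_measurable_diff borel_measurable_indicator shiftA_meas Ameas
                cont_meas[OF cphi])
          then show ?thesis by (simp add: indicator_def)
        qed
        show ?thesis
        proof (rule integrable_bdd[OF m bB, of "2 * Bp"])
          show "\<bar>(indicator A (x + w) - indicator A x) * \<phi> x\<bar> \<le> 2 * Bp" for x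
            using Bp[of x] by (auto simp: indicator_def abs_mult)
          show "x \<notin> B \<Longrightarrow> (indicator A (x + w) - indicator A x) * \<phi> x = 0" for x using p0 by simp
        qed
      qed
      have pt: "\<bar>(indicator A (y + w) - indicator A y) * \<phi> y\<bar> \<le> indicator (Nset w) y + indicator (Pset w) y" for y
      proof (cases "y \<in> supp \<phi>")
        case False then show ?thesis using psi_zero[OF False] by simp
      next
        case True
        then have yE: "y \<in> E w" using sEw by blast
        have "\<bar>\<phi> y\<bar> \<le> 1" using t unfolding test_fun_def by blast
        then show ?thesis using yE unfolding Nset_def Pset_def
          by (cases "y \<in> A"; cases "y + w \<in> A") (auto simp: abs_mult)
      qed
      have "\<bar>Q\<bar> \<le> integral\<^sup>L lebesgue (\<lambda>y. \<bar>(indicator A (y + w) - indicator A y) * \<phi> y\<bar>)"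
        unfolding Q2 by (rule integral_abs_bound)
      also have "\<dots> \<le> integral\<^sup>L lebesgue (\<lambda>y. indicator (Nset w) y + indicator (Pset w) y)"
        by (rule integral_mono[OF integrable_abs[OF iQ] iNP pt])
      also have "\<dots> = measure lebesgue (Nset w) + measure lebesgue (Pset w)"
        using Nset_meas[of w] Pset_meas[of w]
        by (subst Bochner_Integration.integral_add) (auto intro!: integrable_real_indicator simp: fmeasurable_def)
      also have "\<dots> = norm w * sigma_cov w W A"
        unfolding sigma_eq Pset_measure using ez nw by simp
      also have "\<dots> = \<bar>\<epsilon>\<bar> * sigma_cov (\<epsilon> *\<^sub>R u) W A"
      proof -
        have "sigma_cov w W A = sigma_cov (\<epsilon> *\<^sub>R u) W A" unfolding w_def by (rule sigma_neg)
        then show ?thesis using nw by simp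
      qed
      finally show ?thesis .
    qed
    have Db: "\<bar>Q - \<epsilon> * J\<bar> \<le> \<eta> * \<bar>\<epsilon>\<bar> * measure lebesgue B"
    proof -
      have eq: "Q - \<epsilon> * J = integral\<^sup>L lebesgue (\<lambda>x. indicator A x * (\<phi> (x - w) - \<phi> x) - \<epsilon> * (indicator A x * (g x \<bullet> u)))"
        unfolding Q_def J_def using Qint Gint by (simp add: Bochner_Integration.integral_diff)
      have pt: "\<bar>indicator A x * (\<phi> (x - w) - \<phi> x) - \<epsilon> * (indicator A x * (g x \<bullet> u))\<bar> \<le> \<eta> * \<bar>\<epsilon>\<bar> * indicator B x" for x
      proof (cases "x \<in> B")
        case False then show ?thesis using p0 pw0 g0 by simp
      next
        case True
        have "norm (- w) < \<delta>" using nw es by simp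
        then have "\<bar>\<phi> (x + - w) - \<phi> x - g x \<bullet> (- w)\<bar> \<le> \<eta> * norm (- w)" by (rule \<delta>(2))
        moreover have "g x \<bullet> (- w) = \<epsilon> * (g x \<bullet> u)" unfolding w_def by simp
        ultimately have "\<bar>\<phi> (x - w) - \<phi> x - \<epsilon> * (g x \<bullet> u)\<bar> \<le> \<eta> * \<bar>\<epsilon>\<bar>" using nw by simp
        then show ?thesis using True by (auto simp: indicator_def algebra_simps)
      qed
      have "\<bar>Q - \<epsilon> * J\<bar> \<le> integral\<^sup>L lebesgue (\<lambda>x. \<bar>indicator A x * (\<phi> (x - w) - \<phi> x) - \<epsilon> * (indicator A x * (g x \<bullet> u))\<bar>)"
        unfolding eq by (rule integral_abs_bound)
      also have "\<dots> \<le> integral\<^sup>L lebesgue (\<lambda>x. \<eta> * \<bar>\<epsilon>\<bar> * indicator B x)"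
        using Qint Gint by (intro integral_mono[OF _ Iint pt]) auto
      also have "\<dots> = \<eta> * \<bar>\<epsilon>\<bar> * measure lebesgue B" by (simp add: B_def)
      finally show ?thesis .
    qed
    have "\<bar>\<epsilon>\<bar> * J \<le> \<bar>\<epsilon>\<bar> * (sigma_cov (\<epsilon> *\<^sub>R u) W A + e)"
    proof -
      have "\<bar>\<epsilon>\<bar> * J \<le> \<bar>\<epsilon> * J\<bar>" using mult_left_mono[OF abs_ge_self[of J] abs_ge_zero[of \<epsilon>]] by (simp add: abs_mult)
      also have "\<dots> \<le> \<bar>Q\<bar> + \<bar>Q - \<epsilon> * J\<bar>" by linarith
      also have "\<dots> \<le> \<bar>\<epsilon>\<bar> * sigma_cov (\<epsilon> *\<^sub>R u) W A + \<eta> * \<bar>\<epsilon>\<bar> * measure lebesgue B" using Qb Db by linarith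
      also have "\<dots> \<le> \<bar>\<epsilon>\<bar> * sigma_cov (\<epsilon> *\<^sub>R u) W A + \<bar>\<epsilon>\<bar> * e"
      proof -
        have "\<eta> * \<bar>\<epsilon>\<bar> * measure lebesgue B \<le> \<bar>\<epsilon>\<bar> * e"
          using mult_left_mono[OF \<eta>e abs_ge_zero[of \<epsilon>]] by (simp add: algebra_simps)
        then show ?thesis by linarith
      qed
      finally show ?thesis by (simp add: algebra_simps)
    qed
    then have "J \<le> sigma_cov (\<epsilon> *\<^sub>R u) W A + e" using ez by simp
    then show "integral\<^sup>L lebesgue (\<lambda>x. indicator A x * (g x \<bullet> u)) - e \<le> sigma_cov (\<epsilon> *\<^sub>R u) W A"
      unfolding J_def by simp
  qed
qed


lemma main_u:
  assumes u: "norm u = 1"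
  shows "(\<forall>\<epsilon>::real. \<epsilon> \<noteq> 0 \<longrightarrow> 0 \<le> sigma_cov (\<epsilon> *\<^sub>R u) W A \<and> ereal (sigma_cov (\<epsilon> *\<^sub>R u) W A) \<le> dir_var u A W) \<and>
         ((\<lambda>\<epsilon>. ereal (sigma_cov (\<epsilon> *\<^sub>R u) W A)) \<longlongrightarrow> dir_var u A W) (at 0)"
proof (intro conjI allI impI)
  fix \<epsilon> :: real assume "\<epsilon> \<noteq> 0"
  then show "0 \<le> sigma_cov (\<epsilon> *\<^sub>R u) W A" "ereal (sigma_cov (\<epsilon> *\<^sub>R u) W A) \<le> dir_var u A W"
    using sigma_nonneg sigma_le[OF u] by auto
next
  show "((\<lambda>\<epsilon>. ereal (sigma_cov (\<epsilon> *\<^sub>R u) W A)) \<longlongrightarrow> dir_var u A W) (at 0)"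
  proof (rule order_tendstoI)
    fix a assume a: "a < dir_var u A W"
    then obtain p where p: "p \<in> {(\<phi>, g). test_fun W \<phi> g}"
      and ap: "a < ereal (LINT x:W|lebesgue. indicator A x * (snd p x \<bullet> u))"
      unfolding dir_var_def less_SUP_iff by blast
    obtain \<phi> g where pe: "p = (\<phi>, g)" by (cases p)
    have t: "test_fun W \<phi> g" using p pe by simp
    define J where "J = integral\<^sup>L lebesgue (\<lambda>x. indicator A x * (g x \<bullet> u))"
    have aJ: "a < ereal J" using ap unfolding pe J_def using J_eq[OF t, of u] by simp
    show "eventually (\<lambda>\<epsilon>. a < ereal (sigma_cov (\<epsilon> *\<^sub>R u) W A)) (at 0)"
    proof (cases a)
      case (real r)
      then have r: "r < J" using aJ by simp
      have "eventually (\<lambda>\<epsilon>. J - (J - r) / 2 \<le> sigma_cov (\<epsilon> *\<^sub>R u) W A) (at 0)"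
        unfolding J_def by (rule stepD[OF u t]) (use r J_def in simp)
      then show ?thesis
      proof (rule eventually_mono)
        fix \<epsilon> :: real assume "J - (J - r) / 2 \<le> sigma_cov (\<epsilon> *\<^sub>R u) W A"
        then have "J + r \<le> 2 * sigma_cov (\<epsilon> *\<^sub>R u) W A" by (simp add: field_simps)
        then have "r < sigma_cov (\<epsilon> *\<^sub>R u) W A" using r by linarith
        then show "a < ereal (sigma_cov (\<epsilon> *\<^sub>R u) W A)" using real by simp
      qed
    next
      case PInf then show ?thesis using aJ by simp
    next
      case MInf then show ?thesis by simp
    qed
  next
    fix a assume a: "dir_var u A W < a"
    have "eventually (\<lambda>\<epsilon>::real. \<epsilon> \<noteq> 0) (at 0)" by (rule eventually_neq_at_within)
    then show "eventually (\<lambda>\<epsilon>. ereal (sigma_cov (\<epsilon> *\<^sub>R u) W A) < a) (at 0)"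
      by (rule eventually_mono) (use sigma_le[OF u] a in \<open>blast intro: le_less_trans\<close>)
  qed
qed

end

lemma tendsto_sum_ereal_nonneg:
  fixes f :: "'i \<Rightarrow> 'b \<Rightarrow> ereal"
  assumes "finite I" "\<And>i. i \<in> I \<Longrightarrow> (f i \<longlongrightarrow> L i) F" "\<And>i. i \<in> I \<Longrightarrow> 0 \<le> L i"
  shows "((\<lambda>x. \<Sum>i\<in>I. f i x) \<longlongrightarrow> (\<Sum>i\<in>I. L i)) F"
  using assms
proof (induction I rule: finite_induct)
  case empty then show ?case by simp
next
  case (insert i I)
  have IH: "((\<lambda>x. \<Sum>i\<in>I. f i x) \<longlongrightarrow> (\<Sum>i\<in>I. L i)) F" using insert by auto
  have fi: "(f i \<longlongrightarrow> L i) F" using insert by auto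
  have Li: "L i \<noteq> - \<infinity>" using insert(5)[of i] by auto
  have "0 \<le> (\<Sum>i\<in>I. L i)" using insert(5) by (intro sum_nonneg) auto
  then have LI: "(\<Sum>i\<in>I. L i) \<noteq> - \<infinity>" by auto
  have "((\<lambda>x. f i x + (\<Sum>i\<in>I. f i x)) \<longlongrightarrow> L i + (\<Sum>i\<in>I. L i)) F"
    by (rule tendsto_add_ereal_nonneg[OF Li LI fi IH])
  then show ?case using insert(1,2) by simp
qed


theorem proposition3p3:
  fixes A W :: "'a::euclidean_space set"
  assumes "A \<in> sets lebesgue"
    and "bounded W" and "open W" and "emeasure lebesgue (frontier W) = 0"
  shows "(\<forall>u. norm u = 1 \<longrightarrow>
            (\<forall>\<epsilon>::real. \<epsilon> \<noteq> 0 \<longrightarrow>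
               0 \<le> sigma_cov (\<epsilon> *\<^sub>R u) W A \<and>
               ereal (sigma_cov (\<epsilon> *\<^sub>R u) W A) \<le> dir_var u A W) \<and>
            ((\<lambda>\<epsilon>. ereal (sigma_cov (\<epsilon> *\<^sub>R u) W A)) \<longlongrightarrow> dir_var u A W) (at 0))
       \<and> (\<forall>\<epsilon>::real. \<epsilon> \<noteq> 0 \<longrightarrow>
            0 \<le> (\<Sum>b\<in>Basis. sigma_cov (\<epsilon> *\<^sub>R b) W A) \<and>
            ereal (\<Sum>b\<in>Basis. sigma_cov (\<epsilon> *\<^sub>R b) W A) \<le> per_B A W)
       \<and> ((\<lambda>\<epsilon>. ereal (\<Sum>b\<in>Basis. sigma_cov (\<epsilon> *\<^sub>R b) W A)) \<longlongrightarrow> per_B A W) (at 0)"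
proof -
  interpret S: setting A W using assms by unfold_locales auto
  have M: "\<forall>u. norm u = 1 \<longrightarrow>
            (\<forall>\<epsilon>::real. \<epsilon> \<noteq> 0 \<longrightarrow>
               0 \<le> sigma_cov (\<epsilon> *\<^sub>R u) W A \<and>
               ereal (sigma_cov (\<epsilon> *\<^sub>R u) W A) \<le> dir_var u A W) \<and>
            ((\<lambda>\<epsilon>. ereal (sigma_cov (\<epsilon> *\<^sub>R u) W A)) \<longlongrightarrow> dir_var u A W) (at 0)"
    using S.main_u by blast
  have B1: "norm b = 1" if "b \<in> (Basis :: 'a set)" for b using that by simp
  have P2: "\<forall>\<epsilon>::real. \<epsilon> \<noteq> 0 \<longrightarrow>
            0 \<le> (\<Sum>b\<in>Basis. sigma_cov (\<epsilon> *\<^sub>R b) W A) \<and>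
            ereal (\<Sum>b\<in>Basis. sigma_cov (\<epsilon> *\<^sub>R b) W A) \<le> per_B A W"
  proof (intro allI impI conjI)
    fix \<epsilon> :: real assume ez: "\<epsilon> \<noteq> 0"
    show "0 \<le> (\<Sum>b\<in>Basis. sigma_cov (\<epsilon> *\<^sub>R b) W A)" by (intro sum_nonneg S.sigma_nonneg)
    have "ereal (\<Sum>b\<in>Basis. sigma_cov (\<epsilon> *\<^sub>R b) W A) = (\<Sum>b\<in>Basis. ereal (sigma_cov (\<epsilon> *\<^sub>R b) W A))"
      by (simp add: sum_ereal)
    also have "\<dots> \<le> (\<Sum>b\<in>Basis. dir_var b A W)"
      by (rule sum_mono) (rule S.sigma_le[OF B1 ez])
    finally show "ereal (\<Sum>b\<in>Basis. sigma_cov (\<epsilon> *\<^sub>R b) W A) \<le> per_B A W" unfolding per_B_def .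
  qed
  have P3: "((\<lambda>\<epsilon>. ereal (\<Sum>b\<in>Basis. sigma_cov (\<epsilon> *\<^sub>R b) W A)) \<longlongrightarrow> per_B A W) (at 0)"
  proof -
    have "((\<lambda>\<epsilon>. \<Sum>b\<in>Basis. ereal (sigma_cov (\<epsilon> *\<^sub>R b) W A)) \<longlongrightarrow> (\<Sum>b\<in>Basis. dir_var b A W)) (at 0)"
      by (rule tendsto_sum_ereal_nonneg[OF finite_Basis])
         (use M B1 S.dir_var_nonneg in auto)
    then show ?thesis unfolding per_B_def by (simp add: sum_ereal)
  qed
  show ?thesis using M P2 P3 by blast
qed


end
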